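(* Let $1\le p,q<\infty$ and $g\in\mathcal{H}(\mathbb{D})$. The operator $S_g(f)(z)=\int_0^z f'(\zeta)g(\zeta)\,d\zeta$ is bounded on $RM(p,q)$ if and only if $g\in H^\infty$.
   Context: $\mathcal{H}(\mathbb{D})$ denotes the analytic functions on the unit disc $\mathbb{D}$, $H^\infty$ the bounded ones. For $1\le p,q<\infty$, $RM(p,q)$ is the Banach space of $f\in\mathcal{H}(\mathbb{D})$ with $\|f\|_{RM(p,q)}=\left(\frac1{2\pi}\int_0^{2\pi}\left(\int_0^1|f(re^{i\theta})|^p\,dr\right)^{q/p}d\theta\right)^{1/q}<\infty$. *)

theory Defs
  imports "HOL-Complex_Analysis.Complex_Analysis"
begin

definition ennpow :: "ennreal \<Rightarrow> real \<Rightarrow> ennreal" where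
  "ennpow x a = (if x = \<infinity> then \<infinity> else ennreal (enn2real x powr a))"

definition rm_inner :: "real \<Rightarrow> (complex \<Rightarrow> complex) \<Rightarrow> real \<Rightarrow> ennreal" where
  "rm_inner p f \<theta> = (\<integral>\<^sup>+ r\<in>{0..<1}. ennreal (norm (f (of_real r * cis \<theta>)) powr p) \<partial>lborel)"

definition rm_norm :: "real \<Rightarrow> real \<Rightarrow> (complex \<Rightarrow> complex) \<Rightarrow> ennreal" where
  "rm_norm p q f = ennpow (ennreal (1 / (2 * pi)) *
      (\<integral>\<^sup>+ \<theta>\<in>{0..2*pi}. ennpow (rm_inner p f \<theta>) (q / p) \<partial>lborel)) (1 / q)"

definition RM :: "real \<Rightarrow> real \<Rightarrow> (complex \<Rightarrow> complex) set" where
  "RM p q = {f. f holomorphic_on ball 0 1 \<and> rm_norm p q f < \<infinity>}"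

definition bounded_on_RM :: "real \<Rightarrow> real \<Rightarrow> ((complex \<Rightarrow> complex) \<Rightarrow> (complex \<Rightarrow> complex)) \<Rightarrow> bool" where
  "bounded_on_RM p q T \<longleftrightarrow> (\<forall>f\<in>RM p q. T f \<in> RM p q) \<and>
     (\<exists>C\<ge>0. \<forall>f\<in>RM p q. rm_norm p q (T f) \<le> ennreal C * rm_norm p q f)"

definition S_op :: "(complex \<Rightarrow> complex) \<Rightarrow> (complex \<Rightarrow> complex) \<Rightarrow> complex \<Rightarrow> complex" where
  "S_op g f z = contour_integral (linepath 0 z) (\<lambda>\<zeta>. deriv f \<zeta> * g \<zeta>)"

end

theory Submission
  imports Defs
begin

lemma ennpow_ennreal: "0 \<le> x \<Longrightarrow> ennpow (ennreal x) a = ennreal (x powr a)"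
  by (simp add: ennpow_def)

lemma ennpow_top [simp]: "ennpow top a = top"
  by (simp add: ennpow_def)

lemma ennpow_0 [simp]: "ennpow 0 a = 0"
  by (simp add: ennpow_def)

lemma ennpow_1 [simp]: "ennpow x 1 = x"
  by (cases x) (auto simp: ennpow_def)

lemma ennpow_mono:
  assumes "x \<le> y" "0 \<le> a" shows "ennpow x a \<le> ennpow y a"
proof (cases "y = \<infinity>")
  case True then show ?thesis by simp
next
  case False
  then obtain y' where y: "y = ennreal y'" "0 \<le> y'" by (cases y) auto
  with assms obtain x' where x: "x = ennreal x'" "0 \<le> x'" "x' \<le> y'"
    by (cases x) (auto simp: top_unique)
  show ?thesis using x y assms by (simp add: ennpow_ennreal powr_mono2)
qed

lemma ennpow_ennpow: "ennpow (ennpow x a) b = ennpow x (a * b)"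
proof (cases "x = \<infinity>")
  case True then show ?thesis by simp
next
  case False
  then obtain x' where x: "x = ennreal x'" "0 \<le> x'" by (cases x) auto
  show ?thesis using x by (simp add: ennpow_ennreal powr_powr)
qed

lemma ennpow_mult:
  assumes "0 < a" shows "ennpow (x * y) a = ennpow x a * ennpow y a"
proof (cases "x = \<infinity> \<or> y = \<infinity>")
  case True
  show ?thesis
  proof (cases "x = 0 \<or> y = 0")
    case True with \<open>x = \<infinity> \<or> y = \<infinity>\<close> show ?thesis by auto
  next
    case False
    have pos: "0 < ennpow z a" if "z \<noteq> 0" for z
    proof (cases "z = \<infinity>")
      case False
      then obtain z' where "z = ennreal z'" "0 \<le> z'" by (cases z) auto
      with that show ?thesis by (auto simp: ennpow_ennreal)
    qed simp
    from True False show ?thesis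
      using pos[of x] pos[of y] by (auto simp: ennreal_mult_eq_top_iff)
  qed
next
  case False
  then obtain x' y' where x: "x = ennreal x'" "0 \<le> x'" and y: "y = ennreal y'" "0 \<le> y'"
    by (cases x; cases y) auto
  have "x * y = ennreal (x' * y')" using x y by (simp add: ennreal_mult)
  then have "ennpow (x * y) a = ennreal ((x' * y') powr a)" using x y by (simp add: ennpow_ennreal)
  also have "\<dots> = ennreal (x' powr a) * ennreal (y' powr a)" using x y by (simp add: powr_mult ennreal_mult)
  finally show ?thesis using x y by (simp add: ennpow_ennreal)
qed

lemma measurable_ennpow [measurable]:
  assumes [measurable]: "u \<in> borel_measurable M"
  shows "(\<lambda>x. ennpow (u x) a) \<in> borel_measurable M"
  unfolding ennpow_def by measurable

lemma ennpow_add_le: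
  assumes "0 < t" shows "ennpow (x + y) t \<le> ennreal (2 powr t) * (ennpow x t + ennpow y t)"
proof -
  have "x + y \<le> 2 * max x y"
    by (simp add: mult_2 add_mono)
  then have "ennpow (x + y) t \<le> ennpow (2 * max x y) t" by (rule ennpow_mono) (use assms in auto)
  also have "\<dots> \<le> ennreal (2 powr t) * ennpow (max x y) t"
    using assms by (simp add: ennpow_mult ennpow_ennreal[of 2, simplified])
  also have "ennpow (max x y) t \<le> ennpow x t + ennpow y t"
    by (cases "x \<le> y") (auto simp: max_def add_increasing add_increasing2)
  finally show ?thesis by (simp add: mult_left_mono)
qed

lemma young_aux:
  fixes u l t :: real
  assumes "0 \<le> u" "0 < l" "1 \<le> t"
  shows "t * l powr (t - 1) * u \<le> u powr t + (t - 1) * l powr t"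
proof (cases "u = 0")
  case True then show ?thesis using assms by simp
next
  case False
  then have u: "0 < u" using assms by simp
  have "(u powr t) powr (1/t) * (l powr t) powr ((t-1)/t) \<le> (1/t) * u powr t + ((t-1)/t) * l powr t"
    using assms u by (intro Youngs_inequality_0) (auto simp: field_simps)
  moreover have "(u powr t) powr (1/t) = u" using u assms by (simp add: powr_powr)
  moreover have "(l powr t) powr ((t-1)/t) = l powr (t - 1)" using assms by (simp add: powr_powr)
  ultimately have "u * l powr (t-1) \<le> (1/t) * u powr t + ((t-1)/t) * l powr t" by simp
  then have "t * (u * l powr (t-1)) \<le> t * ((1/t) * u powr t + ((t-1)/t) * l powr t)"
    using assms by (intro mult_left_mono) auto
  moreover have "t * ((1/t) * u powr t + ((t-1)/t) * l powr t) = u powr t + (t-1)*l powr t"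
    using assms by (simp add: field_simps)
  ultimately show ?thesis by (simp add: mult_ac)
qed

lemma young_enn:
  fixes l t :: real
  assumes "0 < l" "1 \<le> t"
  shows "ennreal (t * l powr (t - 1)) * x \<le> ennpow x t + ennreal ((t - 1) * l powr t)"
proof (cases "x = top")
  case True
  have "0 < t * l powr (t - 1)" using assms by simp
  then show ?thesis using True by (simp add: ennreal_mult_top)
next
  case False
  then obtain x' where x: "x = ennreal x'" "0 \<le> x'" by (cases x) auto
  have "ennreal (t * l powr (t - 1)) * x = ennreal (t * l powr (t - 1) * x')"
    using x assms by (simp add: ennreal_mult)
  also have "\<dots> \<le> ennreal (x' powr t + (t - 1) * l powr t)"
    using young_aux[of x' l t] x assms by (intro ennreal_leI) auto
  also have "\<dots> = ennpow x t + ennreal ((t - 1) * l powr t)"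
    using x assms by (simp add: ennpow_ennreal ennreal_plus)
  finally show ?thesis .
qed

lemma ennpow_eq_0_iff: "0 < t \<Longrightarrow> ennpow x t = 0 \<longleftrightarrow> x = 0"
  by (cases x) (auto simp: ennpow_def)

lemma ennpow_pos: "x \<noteq> 0 \<Longrightarrow> 0 < ennpow x t"
  by (cases x) (auto simp: ennpow_def)

lemma power_mean:
  assumes [measurable]: "u \<in> borel_measurable M" "w \<in> borel_measurable M" and t: "1 \<le> t"
  shows "ennpow (\<integral>\<^sup>+x. u x * w x \<partial>M) t
           \<le> ennpow (\<integral>\<^sup>+x. w x \<partial>M) (t - 1) * (\<integral>\<^sup>+x. ennpow (u x) t * w x \<partial>M)"
proof -
  define J where "J = (\<integral>\<^sup>+x. u x * w x \<partial>M)"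
  define m where "m = (\<integral>\<^sup>+x. w x \<partial>M)"
  define I where "I = (\<integral>\<^sup>+x. ennpow (u x) t * w x \<partial>M)"
  have Y: "ennreal (t * l powr (t - 1)) * J \<le> I + ennreal ((t - 1) * l powr t) * m" if l: "0 < l" for l
  proof -
    have "ennreal (t * l powr (t - 1)) * J = (\<integral>\<^sup>+x. ennreal (t * l powr (t - 1)) * u x * w x \<partial>M)"
      unfolding J_def by (subst nn_integral_cmult[symmetric]) (auto simp: mult.assoc)
    also have "\<dots> \<le> (\<integral>\<^sup>+x. ennpow (u x) t * w x + ennreal ((t - 1) * l powr t) * w x \<partial>M)"
    proof (rule nn_integral_mono)
      fix x
      have "ennreal (t * l powr (t - 1)) * u x * w x \<le> (ennpow (u x) t + ennreal ((t - 1) * l powr t)) * w x"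
        by (intro mult_right_mono young_enn l t) auto
      then show "ennreal (t * l powr (t - 1)) * u x * w x \<le> ennpow (u x) t * w x + ennreal ((t - 1) * l powr t) * w x"
        by (simp add: distrib_right)
    qed
    also have "\<dots> = I + ennreal ((t - 1) * l powr t) * m"
      unfolding I_def m_def by (simp add: nn_integral_add nn_integral_cmult)
    finally show ?thesis .
  qed
  show ?thesis
    unfolding J_def[symmetric] m_def[symmetric] I_def[symmetric]
  proof (cases "J = 0 \<or> I = 0 \<or> m = 0")
    case True
    have "J = 0"
    proof (cases "J = 0")
      case False
      with True have "I = 0 \<or> m = 0" by auto
      then have "AE x in M. u x * w x = 0"
      proof
        assume "I = 0"
        then have "AE x in M. ennpow (u x) t * w x = 0"
          unfolding I_def by (subst (asm) nn_integral_0_iff_AE) auto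
        then show ?thesis
          by (rule AE_mp) (use t in \<open>auto intro!: AE_I2 simp: ennpow_eq_0_iff\<close>)
      next
        assume "m = 0"
        then have "AE x in M. w x = 0"
          unfolding m_def by (subst (asm) nn_integral_0_iff_AE) auto
        then show ?thesis by (rule AE_mp) (auto intro!: AE_I2)
      qed
      then show ?thesis unfolding J_def by (subst nn_integral_0_iff_AE) auto
    qed
    then show "ennpow J t \<le> ennpow m (t - 1) * I" by simp
  next
    case False
    then have J0: "J \<noteq> 0" and I0: "I \<noteq> 0" and m0: "m \<noteq> 0" by auto
    show "ennpow J t \<le> ennpow m (t - 1) * I"
    proof (cases "I = top \<or> m = top")
      case True
      have "ennpow m (t - 1) * I = top"
        using True I0 m0 ennpow_pos[OF m0, of "t - 1"] by (auto simp: ennreal_mult_eq_top_iff)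
      then show ?thesis by simp
    next
      case False
      then obtain i mm where i: "I = ennreal i" "0 < i" and mm: "m = ennreal mm" "0 < mm"
        using I0 m0 by (cases I; cases m) auto
      define l where "l = (i / mm) powr (1 / t)"
      have l: "0 < l" using i mm by (simp add: l_def)
      have lt: "l powr t = i / mm" using i mm t by (simp add: l_def powr_powr)
      have "ennreal (t * l powr (t - 1)) * J \<le> ennreal (i + (t - 1) * l powr t * mm)"
        using Y[OF l] i mm t by (simp add: ennreal_mult ennreal_plus[symmetric])
      moreover have "0 < t * l powr (t - 1)" using l t by simp
      ultimately have "J \<noteq> top" using l t by (auto simp: ennreal_mult_top top_unique)
      then obtain j where j: "J = ennreal j" "0 \<le> j" by (cases J) auto
      have e1: "ennreal (t * l powr (t - 1)) * J = ennreal (t * l powr (t - 1) * j)"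
        using j l t by (simp add: ennreal_mult)
      have e2: "I + ennreal ((t - 1) * l powr t) * m = ennreal (i + (t - 1) * l powr t * mm)"
        using i mm l t by (simp add: ennreal_mult ennreal_plus)
      have "ennreal (t * l powr (t - 1) * j) \<le> ennreal (i + (t - 1) * l powr t * mm)"
        using Y[OF l] unfolding e1 e2 .
      then have "t * l powr (t - 1) * j \<le> i + (t - 1) * l powr t * mm"
        using i mm l t by (subst (asm) ennreal_le_iff) auto
      also have "\<dots> = t * i" using lt mm by (simp add: field_simps)
      finally have "l powr (t - 1) * j \<le> i" using t by (simp add: mult.assoc)
      also have "i = l powr (t - 1) * (l * mm)"
        using lt mm l by (simp add: powr_diff field_simps)
      finally have jle: "j \<le> l * mm" using l by simp
      have "j powr t \<le> (l * mm) powr t" using jle j t by (intro powr_mono2) auto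
      also have "\<dots> = (i / mm) * mm powr t" using l mm by (simp add: powr_mult lt)
      also have "\<dots> = mm powr (t - 1) * i" using mm by (simp add: powr_diff field_simps)
      finally show ?thesis
        using i mm j by (simp add: ennpow_ennreal ennreal_mult[symmetric] ennreal_leI)
    qed
  qed
qed

lemma cont_polar:
  assumes "continuous_on (ball 0 1) H"
  shows "continuous_on (UNIV \<times> {-1<..<1}) (\<lambda>x::real\<times>real. H (of_real (snd x) * cis (fst x)))"
proof (rule continuous_on_compose2[OF assms])
  show "continuous_on (UNIV \<times> {-1<..<1}) (\<lambda>x::real\<times>real. of_real (snd x) * cis (fst x))"
    by (intro continuous_intros)
  show "(\<lambda>x::real\<times>real. of_real (snd x) * cis (fst x)) ` (UNIV \<times> {-1<..<1}) \<subseteq> ball 0 1"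
    by (auto simp: norm_mult)
qed

lemma meas_polar_pair:
  fixes H :: "complex \<Rightarrow> real"
  assumes "continuous_on (ball 0 1) H"
  shows "(\<lambda>(\<theta>::real, r::real). ennreal (H (of_real r * cis \<theta>)) * indicator {0..<1} r)
           \<in> borel_measurable (lborel \<Otimes>\<^sub>M lborel)"
proof -
  define S :: "(real \<times> real) set" where "S = UNIV \<times> {-1<..<1}"
  have S: "S \<in> sets borel" unfolding S_def by (intro borel_open open_Times) auto
  have k: "(\<lambda>x. indicator S x *\<^sub>R H (of_real (snd x) * cis (fst x))) \<in> borel_measurable borel"
    using borel_measurable_continuous_on_indicator[OF S[unfolded S_def] cont_polar[OF assms]] unfolding S_def .
  then have k': "(\<lambda>x. indicator S x *\<^sub>R H (of_real (snd x) * cis (fst x))) \<in> borel_measurable (lborel \<Otimes>\<^sub>M lborel)"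
    by (simp add: lborel_prod measurable_lborel1)
  have m1: "(\<lambda>x. ennreal (indicator S x *\<^sub>R H (of_real (snd x) * cis (fst x)))) \<in> borel_measurable (lborel \<Otimes>\<^sub>M lborel)"
    using k' by measurable
  have m2: "(\<lambda>x::real\<times>real. indicator {0..<1} (snd x) :: ennreal) \<in> borel_measurable (lborel \<Otimes>\<^sub>M lborel)"
    by measurable
  have "(\<lambda>x. ennreal (indicator S x *\<^sub>R H (of_real (snd x) * cis (fst x))) * indicator {0..<1} (snd x))
           \<in> borel_measurable (lborel \<Otimes>\<^sub>M lborel)"
    using m1 m2 by measurable
  also have "(\<lambda>x::real\<times>real. ennreal (indicator S x *\<^sub>R H (of_real (snd x) * cis (fst x))) * indicator {0..<1} (snd x))
     = (\<lambda>(\<theta>::real, r::real). ennreal (H (of_real r * cis \<theta>)) * indicator {0..<1} r)"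
    by (auto simp: S_def fun_eq_iff indicator_def)
  finally show ?thesis .
qed

lemma meas_polar_pair':
  fixes H :: "complex \<Rightarrow> real"
  assumes "continuous_on (ball 0 1) H"
  shows "(\<lambda>(r::real, \<theta>::real). ennreal (H (of_real r * cis \<theta>)) * indicator {0..<1} r)
           \<in> borel_measurable (lborel \<Otimes>\<^sub>M lborel)"
proof -
  have "(\<lambda>x. (\<lambda>(\<theta>::real, r::real). ennreal (H (of_real r * cis \<theta>)) * indicator {0..<1} r) (snd x, fst x))
          \<in> borel_measurable (lborel \<Otimes>\<^sub>M lborel)"
    by (rule measurable_compose[OF _ meas_polar_pair[OF assms]]) measurable
  then show ?thesis by (simp add: case_prod_beta')
qed

lemma meas_theta:
  fixes H :: "complex \<Rightarrow> real"
  assumes "continuous_on (ball 0 1) H"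
  shows "(\<lambda>\<theta>. \<integral>\<^sup>+ r\<in>{0..<1}. ennreal (H (of_real r * cis \<theta>)) \<partial>lborel) \<in> borel_measurable lborel"
  using lborel.borel_measurable_nn_integral[OF meas_polar_pair[OF assms]] by simp

lemma rm_inner_meas:
  assumes "continuous_on (ball 0 1) F" "0 < p"
  shows "(\<lambda>\<theta>. rm_inner p F \<theta>) \<in> borel_measurable lborel"
  unfolding rm_inner_def
proof (rule meas_theta)
  have "continuous_on (ball 0 1) (\<lambda>z. norm (F z))" by (intro continuous_intros assms)
  then show "continuous_on (ball 0 1) (\<lambda>z. norm (F z) powr p)"
    by (rule continuous_on_powr'[OF _ continuous_on_const]) (use assms in auto)
qed

lemma cont_circle:
  assumes "continuous_on (sphere 0 \<rho>) G" "0 \<le> \<rho>"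
  shows "continuous_on UNIV (\<lambda>\<theta>::real. G (of_real \<rho> * cis \<theta>))"
  by (rule continuous_on_compose2[OF assms(1)]) (use assms(2) in \<open>auto intro!: continuous_intros simp: norm_mult\<close>)

lemma circ_bound:
  assumes "0 < \<rho>" and I: "(G has_contour_integral I) (circlepath 0 \<rho>)"
    and contG: "continuous_on (sphere 0 \<rho>) G"
  shows "ennreal (norm I) \<le> ennreal \<rho> * (\<integral>\<^sup>+\<theta>\<in>{0..2*pi}. ennreal (norm (G (of_real \<rho> * cis \<theta>))) \<partial>lborel)"
proof -
  have hI: "((\<lambda>t. G (0 + \<rho> * cis t) * \<rho> * \<i> * cis t) has_integral I) {0..2*pi}"
    using I unfolding circlepath_def by (subst (asm) has_contour_integral_part_circlepath_iff) auto
  have cG: "continuous_on UNIV (\<lambda>\<theta>::real. G (of_real \<rho> * cis \<theta>))"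
    by (rule cont_circle[OF contG]) (use assms in auto)
  define g where "g = (\<lambda>t. \<rho> * norm (G (of_real \<rho> * cis t)))"
  have cg: "continuous_on UNIV g" unfolding g_def by (intro continuous_intros cG)
  have gint: "g integrable_on {0..2*pi}"
    by (rule integrable_continuous_interval) (rule continuous_on_subset[OF cg], auto)
  have "norm I \<le> integral {0..2*pi} g"
  proof -
    have "norm (integral {0..2*pi} (\<lambda>t. G (0 + \<rho> * cis t) * \<rho> * \<i> * cis t)) \<le> integral {0..2*pi} g"
      by (rule integral_norm_bound_integral)
         (use hI gint assms in \<open>auto simp: g_def norm_mult\<close>)
    then show ?thesis using hI by (simp add: integral_unique)
  qed
  moreover have "(\<integral>\<^sup>+\<theta>. ennreal (g \<theta>) * indicator {0..2*pi} \<theta> \<partial>lborel) = ennreal (integral {0..2*pi} g)"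
    by (rule nn_integral_has_integral_lebesgue'[OF _ integrable_integral[OF gint]]) (use assms in \<open>auto simp: g_def\<close>)
  moreover have "(\<integral>\<^sup>+\<theta>. ennreal (g \<theta>) * indicator {0..2*pi} \<theta> \<partial>lborel)
      = ennreal \<rho> * (\<integral>\<^sup>+\<theta>\<in>{0..2*pi}. ennreal (norm (G (of_real \<rho> * cis \<theta>))) \<partial>lborel)"
  proof -
    have m: "(\<lambda>\<theta>. ennreal (norm (G (of_real \<rho> * cis \<theta>))) * indicator {0..2*pi} \<theta>) \<in> borel_measurable lborel"
    proof -
      have "(\<lambda>\<theta>. norm (G (of_real \<rho> * cis \<theta>))) \<in> borel_measurable borel"
        by (intro borel_measurable_continuous_onI continuous_intros cG)
      then show ?thesis by (simp add: measurable_lborel1) measurable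
    qed
    show ?thesis
      using assms by (subst nn_integral_cmult[symmetric, OF m]) (auto simp: g_def ennreal_mult mult.assoc intro!: nn_integral_cong)
  qed
  ultimately show ?thesis by (simp add: ennreal_leI)
qed

lemma val0_bound:
  assumes holF: "F holomorphic_on ball 0 1" and \<rho>: "0 < \<rho>" "\<rho> < 1"
  shows "ennreal (2 * pi * norm (F 0)) \<le> (\<integral>\<^sup>+\<theta>\<in>{0..2*pi}. ennreal (norm (F (of_real \<rho> * cis \<theta>))) \<partial>lborel)"
proof -
  have sub: "cball 0 \<rho> \<subseteq> ball (0::complex) 1" using \<rho> by auto
  have contF: "continuous_on (cball 0 \<rho>) F"
    using holomorphic_on_imp_continuous_on[OF holF] continuous_on_subset sub by blast
  have hol': "F holomorphic_on ball 0 \<rho>" using holF by (rule holomorphic_on_subset) (use sub in auto)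
  have I: "((\<lambda>u. F u / (u - 0)) has_contour_integral (2 * of_real pi * \<i> * F 0)) (circlepath 0 \<rho>)"
    by (rule Cauchy_integral_circlepath[OF contF hol']) (use \<rho> in simp)
  have cG: "continuous_on (sphere 0 \<rho>) (\<lambda>u. F u / (u - 0))"
    by (intro continuous_intros continuous_on_subset[OF contF]) (use \<rho> in auto)
  have "ennreal (norm (2 * of_real pi * \<i> * F 0)) \<le> ennreal \<rho> * (\<integral>\<^sup>+\<theta>\<in>{0..2*pi}. ennreal (norm ((\<lambda>u. F u / (u - 0)) (of_real \<rho> * cis \<theta>))) \<partial>lborel)"
    by (rule circ_bound[OF \<rho>(1) I cG])
  also have "(\<integral>\<^sup>+\<theta>\<in>{0..2*pi}. ennreal (norm ((\<lambda>u. F u / (u - 0)) (of_real \<rho> * cis \<theta>))) \<partial>lborel)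
     = (\<integral>\<^sup>+\<theta>\<in>{0..2*pi}. ennreal (1/\<rho>) * ennreal (norm (F (of_real \<rho> * cis \<theta>))) \<partial>lborel)"
    using \<rho> by (intro nn_integral_cong) (auto simp: norm_divide norm_mult ennreal_mult[symmetric] divide_simps)
  also have "\<dots> = ennreal (1/\<rho>) * (\<integral>\<^sup>+\<theta>\<in>{0..2*pi}. ennreal (norm (F (of_real \<rho> * cis \<theta>))) \<partial>lborel)"
  proof -
    have cG': "continuous_on UNIV (\<lambda>\<theta>::real. F (of_real \<rho> * cis \<theta>))"
      by (rule cont_circle) (use contF \<rho> in \<open>auto intro: continuous_on_subset\<close>)
    have "(\<lambda>\<theta>. norm (F (of_real \<rho> * cis \<theta>))) \<in> borel_measurable borel"
      by (intro borel_measurable_continuous_onI continuous_intros cG')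
    then have m: "(\<lambda>\<theta>. ennreal (norm (F (of_real \<rho> * cis \<theta>))) * indicator {0..2*pi} \<theta>) \<in> borel_measurable lborel"
      by (simp add: measurable_lborel1) measurable
    show ?thesis by (subst nn_integral_cmult[symmetric, OF m]) (simp add: mult.assoc)
  qed
  finally show ?thesis
    using \<rho> by (simp add: norm_mult ennreal_mult[symmetric] mult.assoc[symmetric])
qed

lemma deriv_bound:
  assumes holF: "F holomorphic_on ball 0 1" and \<rho>: "norm a < \<rho>" "\<rho> < 1"
  shows "ennreal (2 * pi * norm (deriv F a))
     \<le> ennreal (\<rho> / (\<rho> - norm a)^2) * (\<integral>\<^sup>+\<theta>\<in>{0..2*pi}. ennreal (norm (F (of_real \<rho> * cis \<theta>))) \<partial>lborel)"
proof -
  have \<rho>0: "0 < \<rho>" using \<rho> norm_ge_zero[of a] by linarith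
  have sub: "cball 0 \<rho> \<subseteq> ball (0::complex) 1" using \<rho> by auto
  have contF: "continuous_on (cball 0 \<rho>) F"
    using holomorphic_on_imp_continuous_on[OF holF] continuous_on_subset sub by blast
  have hol': "F holomorphic_on ball 0 \<rho>" using holF by (rule holomorphic_on_subset) (use sub in auto)
  have aw: "a \<in> ball 0 \<rho>" using \<rho> by auto
  note C = Cauchy_derivative_integral_circlepath[OF contF hol' aw]
  have I: "((\<lambda>u. F u/(u-a)^2) has_contour_integral contour_integral (circlepath 0 \<rho>) (\<lambda>u. F u/(u-a)^2)) (circlepath 0 \<rho>)"
    using C(1) by (rule has_contour_integral_integral)
  have der: "deriv F a = 1 / (2 * of_real pi * \<i>) * contour_integral (circlepath 0 \<rho>) (\<lambda>u. F u/(u-a)^2)"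
    using C(2) by (rule DERIV_imp_deriv)
  have nz: "u - a \<noteq> 0" if "norm u = \<rho>" for u using that \<rho> by auto
  have cG: "continuous_on (sphere 0 \<rho>) (\<lambda>u. F u/(u-a)^2)"
    by (intro continuous_intros continuous_on_subset[OF contF]) (use nz in auto)
  have "ennreal (norm (contour_integral (circlepath 0 \<rho>) (\<lambda>u. F u/(u-a)^2)))
     \<le> ennreal \<rho> * (\<integral>\<^sup>+\<theta>\<in>{0..2*pi}. ennreal (norm ((\<lambda>u. F u/(u-a)^2) (of_real \<rho> * cis \<theta>))) \<partial>lborel)"
    by (rule circ_bound[OF \<rho>0 I cG])
  also have "(\<integral>\<^sup>+\<theta>\<in>{0..2*pi}. ennreal (norm ((\<lambda>u. F u/(u-a)^2) (of_real \<rho> * cis \<theta>))) \<partial>lborel)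
     \<le> (\<integral>\<^sup>+\<theta>\<in>{0..2*pi}. ennreal (1/(\<rho> - norm a)^2) * ennreal (norm (F (of_real \<rho> * cis \<theta>))) \<partial>lborel)"
  proof (intro nn_integral_mono mult_right_mono)
    fix \<theta> :: real
    define u where "u = of_real \<rho> * cis \<theta>"
    have nu: "norm u = \<rho>" using \<rho>0 by (simp add: u_def norm_mult)
    have "\<rho> - norm a \<le> norm (u - a)" using nu norm_triangle_ineq2[of u a] by simp
    then have "(\<rho> - norm a)^2 \<le> norm (u - a)^2" using \<rho> by (intro power_mono) auto
    moreover have "0 < (\<rho> - norm a)^2" using \<rho> by simp
    ultimately have "norm (F u / (u - a)^2) \<le> norm (F u) / (\<rho> - norm a)^2"
      by (simp add: norm_divide norm_power frac_le)
    then show "ennreal (norm ((\<lambda>u. F u/(u-a)^2) (of_real \<rho> * cis \<theta>)))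
        \<le> ennreal (1/(\<rho> - norm a)^2) * ennreal (norm (F (of_real \<rho> * cis \<theta>)))"
      by (simp add: u_def ennreal_mult[symmetric] ennreal_leI)
  qed auto
  also have "\<dots> = ennreal (1/(\<rho> - norm a)^2) * (\<integral>\<^sup>+\<theta>\<in>{0..2*pi}. ennreal (norm (F (of_real \<rho> * cis \<theta>))) \<partial>lborel)"
  proof -
    have cG': "continuous_on UNIV (\<lambda>\<theta>::real. F (of_real \<rho> * cis \<theta>))"
      by (rule cont_circle) (use contF \<rho>0 in \<open>auto intro: continuous_on_subset\<close>)
    have "(\<lambda>\<theta>. norm (F (of_real \<rho> * cis \<theta>))) \<in> borel_measurable borel"
      by (intro borel_measurable_continuous_onI continuous_intros cG')
    then have m: "(\<lambda>\<theta>. ennreal (norm (F (of_real \<rho> * cis \<theta>))) * indicator {0..2*pi} \<theta>) \<in> borel_measurable lborel"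
      by (simp add: measurable_lborel1) measurable
    show ?thesis by (subst nn_integral_cmult[symmetric, OF m]) (simp add: mult.assoc)
  qed
  finally have "ennreal (norm (contour_integral (circlepath 0 \<rho>) (\<lambda>u. F u/(u-a)^2)))
      \<le> ennreal \<rho> * (ennreal (1/(\<rho> - norm a)^2) * (\<integral>\<^sup>+\<theta>\<in>{0..2*pi}. ennreal (norm (F (of_real \<rho> * cis \<theta>))) \<partial>lborel))"
    by (simp add: mult_left_mono)
  moreover have "norm (contour_integral (circlepath 0 \<rho>) (\<lambda>u. F u/(u-a)^2)) = 2 * pi * norm (deriv F a)"
    by (simp add: der norm_mult norm_divide)
  ultimately show ?thesis
    using \<rho>0 by (simp add: ennreal_mult[symmetric] mult.assoc[symmetric] divide_simps)
qed

definition DD :: "(complex \<Rightarrow> complex) \<Rightarrow> ennreal" where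
  "DD F = (\<integral>\<^sup>+\<theta>\<in>{0..2*pi}. (\<integral>\<^sup>+r\<in>{0..<1}. ennreal (norm (F (of_real r * cis \<theta>))) \<partial>lborel) \<partial>lborel)"

lemma avg_tonelli:
  assumes contF: "continuous_on (ball 0 1) F" and \<rho>0: "0 \<le> \<rho>0" "\<rho>0 < 1" and K: "0 \<le> K"
    and bound: "\<And>\<rho>. \<rho>0 \<le> \<rho> \<Longrightarrow> \<rho> < 1 \<Longrightarrow>
        X \<le> ennreal K * (\<integral>\<^sup>+\<theta>\<in>{0..2*pi}. ennreal (norm (F (of_real \<rho> * cis \<theta>))) \<partial>lborel)"
  shows "ennreal (1 - \<rho>0) * X \<le> ennreal K * DD F"
proof -
  define h where "h = (\<lambda>r \<theta>. ennreal (norm (F (of_real r * cis \<theta>))) * indicator {0..<1} r * indicator {0..2*pi} \<theta>)"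
  have hm: "case_prod h \<in> borel_measurable (lborel \<Otimes>\<^sub>M lborel)"
  proof -
    have m1: "(\<lambda>(r::real, \<theta>::real). ennreal (norm (F (of_real r * cis \<theta>))) * indicator {0..<1} r)
           \<in> borel_measurable (lborel \<Otimes>\<^sub>M lborel)"
      by (rule meas_polar_pair') (intro continuous_intros contF)
    have m2: "(\<lambda>x::real\<times>real. indicator {0..2*pi} (snd x) :: ennreal) \<in> borel_measurable (lborel \<Otimes>\<^sub>M lborel)"
      by measurable
    have "(\<lambda>x. (\<lambda>(r::real, \<theta>::real). ennreal (norm (F (of_real r * cis \<theta>))) * indicator {0..<1} r) x
              * indicator {0..2*pi} (snd x)) \<in> borel_measurable (lborel \<Otimes>\<^sub>M lborel)"
      using m1 m2 by measurable
    then show ?thesis by (simp add: h_def case_prod_beta')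
  qed
  have "ennreal (1 - \<rho>0) * X = (\<integral>\<^sup>+\<rho>. X * indicator {\<rho>0..<1} \<rho> \<partial>lborel)"
    using \<rho>0 by (simp add: nn_integral_cmult_indicator mult.commute)
  also have "\<dots> \<le> (\<integral>\<^sup>+\<rho>. ennreal K * (\<integral>\<^sup>+\<theta>. h \<rho> \<theta> \<partial>lborel) \<partial>lborel)"
  proof (rule nn_integral_mono)
    fix \<rho> :: real
    show "X * indicator {\<rho>0..<1} \<rho> \<le> ennreal K * (\<integral>\<^sup>+\<theta>. h \<rho> \<theta> \<partial>lborel)"
    proof (cases "\<rho>0 \<le> \<rho> \<and> \<rho> < 1")
      case True
      then have "(\<integral>\<^sup>+\<theta>. h \<rho> \<theta> \<partial>lborel) = (\<integral>\<^sup>+\<theta>\<in>{0..2*pi}. ennreal (norm (F (of_real \<rho> * cis \<theta>))) \<partial>lborel)"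
        using \<rho>0 by (simp add: h_def)
      then show ?thesis using True bound[of \<rho>] by simp
    qed (auto)
  qed
  also have "\<dots> = ennreal K * (\<integral>\<^sup>+\<rho>. (\<integral>\<^sup>+\<theta>. h \<rho> \<theta> \<partial>lborel) \<partial>lborel)"
    by (rule nn_integral_cmult) (rule lborel.borel_measurable_nn_integral[OF hm])
  also have "(\<integral>\<^sup>+\<rho>. (\<integral>\<^sup>+\<theta>. h \<rho> \<theta> \<partial>lborel) \<partial>lborel) = (\<integral>\<^sup>+\<theta>. (\<integral>\<^sup>+\<rho>. h \<rho> \<theta> \<partial>lborel) \<partial>lborel)"
    by (rule lborel_pair.Fubini'[OF hm, symmetric])
  also have "\<dots> = DD F"
    unfolding DD_def h_def
  proof (intro nn_integral_cong)
    fix \<theta> :: real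
    show "(\<integral>\<^sup>+\<rho>. ennreal (norm (F (of_real \<rho> * cis \<theta>))) * indicator {0..<1} \<rho> * indicator {0..2*pi} \<theta> \<partial>lborel) =
      (\<integral>\<^sup>+r\<in>{0..<1}. ennreal (norm (F (of_real r * cis \<theta>))) \<partial>lborel) * indicator {0..2*pi} \<theta>"
      by (cases "\<theta> \<in> {0..2*pi}") auto
  qed
  finally show ?thesis .
qed

definition NN :: "real \<Rightarrow> real \<Rightarrow> (complex \<Rightarrow> complex) \<Rightarrow> ennreal" where
  "NN p q F = (\<integral>\<^sup>+\<theta>\<in>{0..2*pi}. ennpow (rm_inner p F \<theta>) (q / p) \<partial>lborel)"

lemma rm_norm_NN: "rm_norm p q F = ennpow (ennreal (1 / (2 * pi)) * NN p q F) (1 / q)"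
  by (simp add: rm_norm_def NN_def)

lemma inner_bound:
  assumes contF: "continuous_on (ball 0 1) F" and p: "1 \<le> p"
  shows "(\<integral>\<^sup>+r\<in>{0..<1}. ennreal (norm (F (of_real r * cis \<theta>))) \<partial>lborel) \<le> ennpow (rm_inner p F \<theta>) (1/p)"
proof -
  define u where "u = (\<lambda>r::real. ennreal (norm (F (of_real r * cis \<theta>))) * indicator {0..<1} r)"
  have um: "u \<in> borel_measurable lborel"
  proof -
    have "(\<lambda>(\<theta>::real, r::real). ennreal (norm (F (of_real r * cis \<theta>))) * indicator {0..<1} r)
           \<in> borel_measurable (lborel \<Otimes>\<^sub>M lborel)"
      by (rule meas_polar_pair) (intro continuous_intros contF)
    from measurable_compose_Pair1[OF _ this, of \<theta>] show ?thesis by (simp add: u_def)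
  qed
  have PM: "ennpow (\<integral>\<^sup>+r. u r * indicator {0..<1} r \<partial>lborel) p
      \<le> ennpow 1 (p - 1) * (\<integral>\<^sup>+r. ennpow (u r) p * indicator {0..<1} r \<partial>lborel)"
    using power_mean[of u lborel "indicator {0..<1}" p] um p by simp
  have e1: "(\<integral>\<^sup>+r. u r * indicator {0..<1} r \<partial>lborel) = (\<integral>\<^sup>+r\<in>{0..<1}. ennreal (norm (F (of_real r * cis \<theta>))) \<partial>lborel)"
    by (intro nn_integral_cong) (auto simp: u_def indicator_def)
  have e2: "(\<integral>\<^sup>+r. ennpow (u r) p * indicator {0..<1} r \<partial>lborel) = rm_inner p F \<theta>"
    unfolding rm_inner_def
    by (intro nn_integral_cong) (auto simp: u_def indicator_def ennpow_ennreal)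
  have e3: "ennpow (1::ennreal) (p - 1) = 1"
    by (simp add: ennpow_ennreal[of 1, simplified])
  have "ennpow (\<integral>\<^sup>+r\<in>{0..<1}. ennreal (norm (F (of_real r * cis \<theta>))) \<partial>lborel) p \<le> rm_inner p F \<theta>"
    using PM unfolding e1 e2 e3 by simp
  then have "ennpow (ennpow (\<integral>\<^sup>+r\<in>{0..<1}. ennreal (norm (F (of_real r * cis \<theta>))) \<partial>lborel) p) (1/p)
      \<le> ennpow (rm_inner p F \<theta>) (1/p)"
    by (rule ennpow_mono) (use p in auto)
  then show ?thesis using p by (simp add: ennpow_ennpow)
qed

lemma DD_bound:
  assumes contF: "continuous_on (ball 0 1) F" and p: "1 \<le> p" and q: "1 \<le> q"
  shows "ennpow (DD F) q \<le> ennreal ((2*pi) powr (q - 1)) * NN p q F"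
proof -
  define Y where "Y = (\<lambda>\<theta>. ennpow (rm_inner p F \<theta>) (1/p))"
  have Ym: "Y \<in> borel_measurable lborel"
    unfolding Y_def by (intro measurable_ennpow rm_inner_meas contF) (use p in auto)
  have "DD F \<le> (\<integral>\<^sup>+\<theta>. Y \<theta> * indicator {0..2*pi} \<theta> \<partial>lborel)"
    unfolding DD_def Y_def by (intro nn_integral_mono mult_right_mono inner_bound contF p) auto
  then have "ennpow (DD F) q \<le> ennpow (\<integral>\<^sup>+\<theta>. Y \<theta> * indicator {0..2*pi} \<theta> \<partial>lborel) q"
    by (rule ennpow_mono) (use q in auto)
  also have "\<dots> \<le> ennpow (ennreal (2*pi)) (q - 1) * (\<integral>\<^sup>+\<theta>. ennpow (Y \<theta>) q * indicator {0..2*pi} \<theta> \<partial>lborel)"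
    using power_mean[of Y lborel "indicator {0..2*pi}" q] Ym q by simp
  also have "ennpow (ennreal (2*pi)) (q - 1) = ennreal ((2*pi) powr (q - 1))"
    by (simp add: ennpow_ennreal)
  also have "(\<integral>\<^sup>+\<theta>. ennpow (Y \<theta>) q * indicator {0..2*pi} \<theta> \<partial>lborel) = NN p q F"
    unfolding NN_def Y_def by (simp add: ennpow_ennpow)
  finally show ?thesis .
qed

lemma primitive_ball:
  assumes holF: "F holomorphic_on ball 0 1" and z: "z \<in> ball 0 1"
  shows "((\<lambda>x. contour_integral (linepath 0 x) F) has_field_derivative F z) (at z)"
proof (rule triangle_contour_integrals_starlike_primitive[OF _ _ open_ball z])
  show "continuous_on (ball 0 1) F" using holF by (rule holomorphic_on_imp_continuous_on)
  show "0 \<in> ball (0::complex) 1" by simp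
  show "closed_segment 0 y \<subseteq> ball 0 1" if "y \<in> ball 0 1" for y :: complex
    using that by (intro closed_segment_subset) (auto simp: convex_ball)
  fix b c assume bc: "closed_segment b c \<subseteq> ball (0::complex) 1"
  then have b: "b \<in> ball 0 1" and c: "c \<in> ball 0 1" by auto
  have "(F has_contour_integral 0) (linepath 0 b +++ linepath b c +++ linepath c 0)"
  proof (rule Cauchy_theorem_convex_simple[OF holF convex_ball])
    show "valid_path (linepath 0 b +++ linepath b c +++ linepath c 0)"
      by (intro valid_path_join valid_path_linepath) auto
    have "path_image (linepath 0 b) \<subseteq> ball 0 1" "path_image (linepath b c) \<subseteq> ball 0 1"
         "path_image (linepath c 0) \<subseteq> ball 0 1"
      using b c by (simp_all add: closed_segment_subset convex_ball)
    then show "path_image (linepath 0 b +++ linepath b c +++ linepath c 0) \<subseteq> ball 0 1"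
      by (auto simp: path_image_join)
  qed auto
  then show "contour_integral (linepath 0 b) F + contour_integral (linepath b c) F + contour_integral (linepath c 0) F = 0"
    by (rule has_chain_integral_chain_integral3)
qed

lemma S_op_deriv:
  assumes holf: "f holomorphic_on ball 0 1" and holg: "g holomorphic_on ball 0 1" and z: "z \<in> ball 0 1"
  shows "(S_op g f has_field_derivative deriv f z * g z) (at z)"
proof -
  have "(\<lambda>\<zeta>. deriv f \<zeta> * g \<zeta>) holomorphic_on ball 0 1"
    by (intro holomorphic_intros holomorphic_deriv holf holg) auto
  from primitive_ball[OF this z] show ?thesis
    unfolding S_op_def[abs_def] by simp
qed

lemma S_op_holo:
  assumes holf: "f holomorphic_on ball 0 1" and holg: "g holomorphic_on ball 0 1"
  shows "S_op g f holomorphic_on ball 0 1"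
  unfolding holomorphic_on_def field_differentiable_def
  using S_op_deriv[OF holf holg] has_field_derivative_at_within by blast

lemma S_op_derivE:
  assumes holf: "f holomorphic_on ball 0 1" and holg: "g holomorphic_on ball 0 1" and z: "z \<in> ball 0 1"
  shows "deriv (S_op g f) z = deriv f z * g z"
  using S_op_deriv[OF assms] by (rule DERIV_imp_deriv)

lemma S_op_0 [simp]: "S_op g f 0 = 0"
  by (simp add: S_op_def)

lemma ennpow_less_top_iff: "ennpow x a < top \<longleftrightarrow> x < top"
  by (cases x) (auto simp: ennpow_def)

lemma NN_from_rm_norm:
  assumes "0 < q" shows "NN p q F = ennreal (2*pi) * ennpow (rm_norm p q F) q"
proof -
  have "ennpow (rm_norm p q F) q = ennreal (1 / (2 * pi)) * NN p q F"
    using assms by (simp add: rm_norm_NN ennpow_ennpow)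
  then have "ennreal (2*pi) * ennpow (rm_norm p q F) q = (ennreal (2*pi) * ennreal (1 / (2 * pi))) * NN p q F"
    by (simp add: mult.assoc)
  also have "ennreal (2*pi) * ennreal (1 / (2 * pi)) = 1"
    by (simp add: ennreal_mult[symmetric])
  finally show ?thesis by simp
qed

lemma deriv_rm:
  assumes p: "1 \<le> p" and q: "1 \<le> q" and a: "a \<in> ball 0 1"
  shows "\<exists>c>0. \<forall>F. F holomorphic_on ball 0 1 \<longrightarrow> ennreal (c * norm (deriv F a)) \<le> rm_norm p q F"
proof -
  define \<rho>0 where "\<rho>0 = (1 + norm a) / 2"
  have a1: "norm a < 1" using a by simp
  have \<rho>0: "0 \<le> \<rho>0" "\<rho>0 < 1" "norm a < \<rho>0" using a1 by (auto simp: \<rho>0_def)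
  define Ka where "Ka = 1 / (\<rho>0 - norm a)^2"
  have Ka: "0 < Ka" using \<rho>0 by (simp add: Ka_def)
  define c0 where "c0 = 2 * pi * (1 - \<rho>0) / Ka"
  have c0: "0 < c0" using Ka \<rho>0 by (simp add: c0_def)
  define K2 where "K2 = (2*pi) powr (q - 1)"
  have K2: "0 < K2" by (simp add: K2_def)
  define c where "c = c0 * (2 * pi * K2) powr (-1/q)"
  have c: "0 < c" using c0 K2 by (simp add: c_def)
  show ?thesis
  proof (intro exI[of _ c] conjI c allI impI)
    fix F assume holF: "F holomorphic_on ball 0 1"
    have contF: "continuous_on (ball 0 1) F" using holF by (rule holomorphic_on_imp_continuous_on)
    have b: "ennreal (2 * pi * norm (deriv F a)) \<le> ennreal Ka * (\<integral>\<^sup>+\<theta>\<in>{0..2*pi}. ennreal (norm (F (of_real \<rho> * cis \<theta>))) \<partial>lborel)"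
      if "\<rho>0 \<le> \<rho>" "\<rho> < 1" for \<rho>
    proof -
      have "norm a < \<rho>" using that \<rho>0 by linarith
      note db = deriv_bound[OF holF this \<open>\<rho> < 1\<close>]
      have "\<rho> / (\<rho> - norm a)^2 \<le> Ka"
      proof -
        have "\<rho> / (\<rho> - norm a)^2 \<le> 1 / (\<rho> - norm a)^2"
          using that \<open>norm a < \<rho>\<close> by (intro divide_right_mono) auto
        also have "\<dots> \<le> 1 / (\<rho>0 - norm a)^2"
          using that \<rho>0 by (intro divide_left_mono power_mono mult_pos_pos) auto
        finally show ?thesis by (simp add: Ka_def)
      qed
      then have "ennreal (\<rho> / (\<rho> - norm a)^2) \<le> ennreal Ka" by (rule ennreal_leI)
      with db show ?thesis by (meson mult_right_mono order_trans zero_le)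
    qed
    have "ennreal (1 - \<rho>0) * ennreal (2 * pi * norm (deriv F a)) \<le> ennreal Ka * DD F"
      by (rule avg_tonelli[OF contF \<rho>0(1,2) _ b]) (use Ka in auto)
    then have "ennreal (c0 * norm (deriv F a)) \<le> DD F"
    proof -
      assume h: "ennreal (1 - \<rho>0) * ennreal (2 * pi * norm (deriv F a)) \<le> ennreal Ka * DD F"
      have "ennreal (1/Ka) * (ennreal (1 - \<rho>0) * ennreal (2 * pi * norm (deriv F a))) \<le> ennreal (1/Ka) * (ennreal Ka * DD F)"
        using h by (rule mult_left_mono) simp
      also have "ennreal (1/Ka) * (ennreal Ka * DD F) = DD F"
        using Ka by (simp add: mult.assoc[symmetric] ennreal_mult[symmetric])
      also have "ennreal (1/Ka) * (ennreal (1 - \<rho>0) * ennreal (2 * pi * norm (deriv F a))) = ennreal (1/Ka * ((1 - \<rho>0) * (2 * pi * norm (deriv F a))))"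
        using ennreal_mult[of "1/Ka" "(1 - \<rho>0) * (2 * pi * norm (deriv F a))"]
              ennreal_mult[of "1 - \<rho>0" "2 * pi * norm (deriv F a)"] Ka \<rho>0
        by (metis divide_nonneg_nonneg less_eq_real_def mult_nonneg_nonneg norm_ge_zero pi_ge_zero zero_le_numeral diff_ge_0_iff_ge zero_le_one)
      also have "1/Ka * ((1 - \<rho>0) * (2 * pi * norm (deriv F a))) = c0 * norm (deriv F a)"
        using Ka by (simp add: c0_def field_simps)
      finally show ?thesis .
    qed
    then have "ennpow (ennreal (c0 * norm (deriv F a))) q \<le> ennpow (DD F) q"
      by (rule ennpow_mono) (use q in auto)
    also have "\<dots> \<le> ennreal K2 * NN p q F"
      unfolding K2_def by (rule DD_bound[OF contF p q])
    finally have h1: "ennreal ((c0 * norm (deriv F a)) powr q) \<le> ennreal K2 * NN p q F"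
      using c0 by (simp add: ennpow_ennreal)
    have "ennreal (1 / (2*pi*K2)) * ennreal ((c0 * norm (deriv F a)) powr q) \<le> ennreal (1 / (2*pi*K2)) * (ennreal K2 * NN p q F)"
      using h1 by (rule mult_left_mono) simp
    also have "ennreal (1 / (2*pi*K2)) * (ennreal K2 * NN p q F) = ennreal (1 / (2 * pi)) * NN p q F"
      using K2 by (simp add: mult.assoc[symmetric] ennreal_mult[symmetric])
    finally have h2: "ennreal ((c0 * norm (deriv F a)) powr q / (2*pi*K2)) \<le> ennreal (1 / (2 * pi)) * NN p q F"
      using K2 c0 by (simp add: ennreal_mult[symmetric])
    have "ennpow (ennreal ((c0 * norm (deriv F a)) powr q / (2*pi*K2))) (1/q) \<le> rm_norm p q F"
      unfolding rm_norm_NN by (rule ennpow_mono[OF h2]) (use q in auto)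
    moreover have "ennpow (ennreal ((c0 * norm (deriv F a)) powr q / (2*pi*K2))) (1/q) = ennreal (c * norm (deriv F a))"
    proof -
      have "((c0 * norm (deriv F a)) powr q / (2*pi*K2)) powr (1/q)
          = ((c0 * norm (deriv F a)) powr q) powr (1/q) / (2*pi*K2) powr (1/q)"
        using K2 c0 by (simp add: powr_divide)
      also have "((c0 * norm (deriv F a)) powr q) powr (1/q) = c0 * norm (deriv F a)"
        using q c0 by (simp add: powr_powr)
      also have "(2*pi*K2) powr (1/q) = 1 / (2*pi*K2) powr (-1/q)"
        using K2 by (simp add: powr_minus_divide powr_minus divide_simps)
      finally have "((c0 * norm (deriv F a)) powr q / (2*pi*K2)) powr (1/q) = c * norm (deriv F a)"
        by (simp add: c_def)
      then show ?thesis using K2 c0 by (simp add: ennpow_ennreal)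
    qed
    ultimately show "ennreal (c * norm (deriv F a)) \<le> rm_norm p q F" by simp
  qed
qed

lemma pow_bound_le:
  fixes x C R c :: real
  assumes "0 < c" "0 \<le> x" "0 \<le> C" "0 \<le> R" and h: "\<And>k. c * x ^ k \<le> C ^ k * R"
  shows "x \<le> C"
proof (rule ccontr)
  assume "\<not> x \<le> C"
  then have xC: "C < x" by simp
  show False
  proof (cases "C = 0")
    case True
    from h[of 1] True have "c * x \<le> 0" by simp
    moreover have "0 < c * x" using assms xC True by simp
    ultimately show False by simp
  next
    case False
    then have C: "0 < C" using assms by simp
    have "1 < x / C" using xC C by simp
    then obtain n where n: "R / c < (x / C) ^ n" using real_arch_pow by blast
    have "(x / C) ^ n * (c * C ^ n) = c * x ^ n" using C by (simp add: power_divide)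
    also have "\<dots> \<le> C ^ n * R" by (rule h)
    finally have "(x / C) ^ n \<le> R / c" using C assms by (simp add: field_simps)
    with n show False by simp
  qed
qed

lemma rm_norm_finite_iff: "rm_norm p q F < top \<longleftrightarrow> NN p q F < top"
  unfolding rm_norm_NN ennpow_less_top_iff by (auto simp: ennreal_mult_less_top)

lemma id_RM:
  assumes p: "1 \<le> p" and q: "1 \<le> q"
  shows "(\<lambda>z. z) \<in> RM p q"
proof -
  have inner: "rm_inner p (\<lambda>z. z) \<theta> \<le> 1" for \<theta>
  proof -
    have "rm_inner p (\<lambda>z. z) \<theta> \<le> (\<integral>\<^sup>+r::real\<in>{0..<1}. 1 \<partial>lborel)"
      unfolding rm_inner_def
    proof (rule nn_integral_mono)
      fix r :: real
      show "ennreal (norm (of_real r * cis \<theta>) powr p) * indicator {0..<1} r \<le> 1 * indicator {0..<1} r"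
      proof (cases "r \<in> {0..<1}")
        case True
        then have "norm (of_real r * cis \<theta> :: complex) powr p \<le> 1"
          using p by (auto simp: norm_mult intro!: powr_le1)
        then show ?thesis using True by simp
      qed simp
    qed
    then show ?thesis by simp
  qed
  have "NN p q (\<lambda>z. z) \<le> (\<integral>\<^sup>+\<theta>::real\<in>{0..2*pi}. 1 \<partial>lborel)"
    unfolding NN_def
  proof (intro nn_integral_mono mult_right_mono)
    fix \<theta> :: real
    have "ennpow (rm_inner p (\<lambda>z. z) \<theta>) (q / p) \<le> ennpow 1 (q/p)"
      by (rule ennpow_mono[OF inner]) (use p q in auto)
    then show "ennpow (rm_inner p (\<lambda>z. z) \<theta>) (q / p) \<le> 1"
      by (simp add: ennpow_ennreal[of 1, simplified])
  qed auto
  also have "\<dots> < top" by simp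
  finally show ?thesis
    unfolding RM_def using rm_norm_finite_iff by auto
qed

lemma necessity:
  assumes p: "1 \<le> p" and q: "1 \<le> q" and holg: "g holomorphic_on ball 0 1"
    and bd: "bounded_on_RM p q (S_op g)"
  shows "bounded (g ` ball 0 1)"
proof -
  from bd obtain C where C: "0 \<le> C" and clos: "\<And>f. f \<in> RM p q \<Longrightarrow> S_op g f \<in> RM p q"
    and nb: "\<And>f. f \<in> RM p q \<Longrightarrow> rm_norm p q (S_op g f) \<le> ennreal C * rm_norm p q f"
    unfolding bounded_on_RM_def by blast
  define \<Phi> where "\<Phi> k = (S_op g ^^ k) (\<lambda>z. z)" for k
  have \<Phi>RM: "\<Phi> k \<in> RM p q" for k
    by (induction k) (auto simp: \<Phi>_def id_RM[OF p q] clos)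
  define R where "R = enn2real (rm_norm p q (\<lambda>z. z))"
  have R: "rm_norm p q (\<lambda>z. z) = ennreal R" "0 \<le> R"
    using id_RM[OF p q] unfolding R_def RM_def by (auto simp: less_top)
  have \<Phi>norm: "rm_norm p q (\<Phi> k) \<le> ennreal (C ^ k * R)" for k
  proof (induction k)
    case 0 then show ?case by (simp add: \<Phi>_def R)
  next
    case (Suc k)
    have "rm_norm p q (\<Phi> (Suc k)) = rm_norm p q (S_op g (\<Phi> k))" by (simp add: \<Phi>_def)
    also have "\<dots> \<le> ennreal C * rm_norm p q (\<Phi> k)" by (rule nb[OF \<Phi>RM])
    also have "\<dots> \<le> ennreal C * ennreal (C ^ k * R)" by (rule mult_left_mono[OF Suc]) simp
    also have "\<dots> = ennreal (C ^ Suc k * R)" using C R by (simp add: ennreal_mult[symmetric] mult.assoc)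
    finally show ?case .
  qed
  have \<Phi>der: "deriv (\<Phi> k) a = g a ^ k" if a: "a \<in> ball 0 1" for a k
  proof (induction k)
    case 0 then show ?case by (simp add: \<Phi>_def)
  next
    case (Suc k)
    have hol: "\<Phi> k holomorphic_on ball 0 1" using \<Phi>RM[of k] by (simp add: RM_def)
    have "deriv (\<Phi> (Suc k)) a = deriv (S_op g (\<Phi> k)) a" by (simp add: \<Phi>_def)
    also have "\<dots> = deriv (\<Phi> k) a * g a" by (rule S_op_derivE[OF hol holg a])
    finally show ?case using Suc by simp
  qed
  have "norm (g a) \<le> C" if a: "a \<in> ball 0 1" for a
  proof -
    obtain c where c: "0 < c" and cb: "\<And>F. F holomorphic_on ball 0 1 \<Longrightarrow> ennreal (c * norm (deriv F a)) \<le> rm_norm p q F"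
      using deriv_rm[OF p q a] by blast
    show ?thesis
    proof (rule pow_bound_le[OF c norm_ge_zero C R(2)])
      fix k
      have hol: "\<Phi> k holomorphic_on ball 0 1" using \<Phi>RM[of k] by (simp add: RM_def)
      have "ennreal (c * norm (g a) ^ k) \<le> ennreal (C ^ k * R)"
        using cb[OF hol] \<Phi>norm[of k] \<Phi>der[OF a, of k] by (simp add: norm_power)
      then show "c * norm (g a) ^ k \<le> C ^ k * R"
        using C R by (subst (asm) ennreal_le_iff) auto
    qed
  qed
  then show ?thesis unfolding bounded_iff by blast
qed

lemma pow_int_Icc:
  fixes \<gamma> a b :: real
  assumes "a \<le> b" "b < 1" "\<gamma> \<noteq> -1"
  shows "(\<integral>\<^sup>+r. ennreal ((1 - r) powr \<gamma>) * indicator {a..b} r \<partial>lborel)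
           = ennreal (((1 - a) powr (\<gamma> + 1) - (1 - b) powr (\<gamma> + 1)) / (\<gamma> + 1))"
proof -
  define F where "F = (\<lambda>r::real. -((1 - r) powr (\<gamma> + 1) / (\<gamma> + 1)))"
  have D: "DERIV F x :> (1 - x) powr \<gamma>" if "x \<in> {a..b}" for x
  proof -
    have x: "0 < 1 - x" using that assms by auto
    have der: "DERIV (\<lambda>x. (1 - x) powr (\<gamma> + 1)) x :> (\<gamma> + 1) * (1 - x) powr (\<gamma> + 1 - of_nat 1) * (-1)"
      by (rule DERIV_fun_powr) (use x in \<open>auto intro!: derivative_eq_intros\<close>)
    have d2: "DERIV F x :> - ((\<gamma> + 1) * (1 - x) powr (\<gamma> + 1 - of_nat 1) * (-1) / (\<gamma> + 1))"
      unfolding F_def by (rule DERIV_minus[OF DERIV_cdivide[OF der]])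
    have g1: "\<gamma> + 1 \<noteq> 0" using assms(3) by linarith
    have e: "- ((\<gamma> + 1) * (1 - x) powr (\<gamma> + 1 - of_nat 1) * (-1) / (\<gamma> + 1)) = (1 - x) powr \<gamma>"
      using g1 by simp
    show ?thesis using d2 unfolding e .
  qed
  have "(\<integral>\<^sup>+r. ennreal ((1 - r) powr \<gamma>) * indicator {a..b} r \<partial>lborel) = ennreal (F b - F a)"
    by (rule nn_integral_FTC_Icc[OF _ D]) (use assms in auto)
  also have "F b - F a = ((1 - a) powr (\<gamma> + 1) - (1 - b) powr (\<gamma> + 1)) / (\<gamma> + 1)"
    by (simp add: F_def diff_divide_distrib)
  finally show ?thesis .
qed

lemma improper_int:
  fixes \<alpha> s :: real
  assumes "0 \<le> \<alpha>" "\<alpha> < 1" "s < 1"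
  shows "(\<integral>\<^sup>+r. ennreal ((1 - r) powr (-\<alpha>)) * indicator {s..<1} r \<partial>lborel)
           \<le> ennreal ((1 - s) powr (1 - \<alpha>) / (1 - \<alpha>))"
proof -
  define b where "b n = 1 - (1 - s) / real (Suc n)" for n
  define f where "f n r = ennreal ((1 - r) powr (-\<alpha>)) * indicator {s..b n} r" for n r
  have b: "s \<le> b n" "b n < 1" for n
  proof -
    have "(1 - s) / real (Suc n) \<le> (1 - s) / 1"
      using assms by (intro divide_left_mono) auto
    then show "s \<le> b n" by (simp add: b_def)
    show "b n < 1" using assms by (simp add: b_def)
  qed
  have bmono: "b n \<le> b m" if "n \<le> m" for n m
    using assms that by (auto simp: b_def intro!: divide_left_mono)
  have inc: "incseq f"
  proof (unfold incseq_def le_fun_def, intro allI impI)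
    fix n m :: nat and r :: real assume nm: "n \<le> m"
    have "indicator {s..b n} r \<le> (indicator {s..b m} r :: ennreal)"
      using bmono[OF nm] by (cases "r \<in> {s..b n}") auto
    then show "f n r \<le> f m r" unfolding f_def by (rule mult_left_mono) simp
  qed
  have meas: "f n \<in> borel_measurable lborel" for n
    unfolding f_def by measurable
  have le: "ennreal ((1 - r) powr (-\<alpha>)) * indicator {s..<1} r \<le> (SUP n. f n r)" for r
  proof (cases "r \<in> {s..<1}")
    case True
    then have "0 < 1 - r" by auto
    obtain n0 where n0: "(1 - s) / (1 - r) < real n0"
      using reals_Archimedean2 by blast
    define n where "n = n0"
    have n: "(1 - s) / (1 - r) < real (Suc n)" using n0 by (simp add: n_def)
    then have "(1 - s) / real (Suc n) < 1 - r"
      using \<open>0 < 1 - r\<close> by (simp add: field_simps)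
    then have "r \<le> b n" by (simp add: b_def)
    then have "ennreal ((1 - r) powr (-\<alpha>)) * indicator {s..<1} r = f n r"
      using True by (simp add: f_def)
    also have "\<dots> \<le> (SUP n. f n r)" by (rule SUP_upper) simp
    finally show ?thesis .
  qed simp
  have "(\<integral>\<^sup>+r. ennreal ((1 - r) powr (-\<alpha>)) * indicator {s..<1} r \<partial>lborel) \<le> (\<integral>\<^sup>+r. (SUP n. f n r) \<partial>lborel)"
    by (intro nn_integral_mono le)
  also have "\<dots> = (SUP n. integral\<^sup>N lborel (f n))"
    by (rule nn_integral_monotone_convergence_SUP[OF inc meas])
  also have "\<dots> \<le> ennreal ((1 - s) powr (1 - \<alpha>) / (1 - \<alpha>))"
  proof (rule SUP_least)
    fix n
    have "integral\<^sup>N lborel (f n) = ennreal (((1 - s) powr (-\<alpha> + 1) - (1 - b n) powr (-\<alpha> + 1)) / (-\<alpha> + 1))"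
      unfolding f_def by (rule pow_int_Icc[OF b(1) b(2)]) (use assms in auto)
    also have "\<dots> \<le> ennreal ((1 - s) powr (1 - \<alpha>) / (1 - \<alpha>))"
      apply (intro ennreal_leI)
      apply simp
      apply (rule divide_right_mono)
      using assms apply simp
      using assms apply simp
      done
    finally show "integral\<^sup>N lborel (f n) \<le> ennreal ((1 - s) powr (1 - \<alpha>) / (1 - \<alpha>))" .
  qed
  finally show ?thesis .
qed

lemma hardy_pointwise:
  fixes \<phi> :: "real \<Rightarrow> real" and p r :: real
  assumes \<phi>m: "\<phi> \<in> borel_measurable borel" and \<phi>0: "\<And>s. 0 \<le> \<phi> s" and p: "1 \<le> p"
    and r: "0 \<le> r" "r < 1"
  shows "ennpow (\<integral>\<^sup>+s. ennreal (\<phi> s / (1 - s)) * indicator {0..r} s \<partial>lborel) p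
      \<le> ennreal (p powr (p - 1) * (1 - r) powr (-((p - 1) / p)))
         * (\<integral>\<^sup>+s. ennreal (\<phi> s powr p * (1 - s) powr (-1/p)) * indicator {0..r} s \<partial>lborel)"
proof -
  define x where "x s = ennreal (\<phi> s * (1 - s) powr (1/p))" for s
  define w where "w s = ennreal ((1 - s) powr (-1 - 1/p)) * indicator {0..r} s" for s
  have xm: "x \<in> borel_measurable lborel" unfolding x_def using \<phi>m by (simp add: measurable_lborel1) measurable
  have wm: "w \<in> borel_measurable lborel" unfolding w_def by measurable
  have PM: "ennpow (\<integral>\<^sup>+s. x s * w s \<partial>lborel) p \<le> ennpow (\<integral>\<^sup>+s. w s \<partial>lborel) (p - 1) * (\<integral>\<^sup>+s. ennpow (x s) p * w s \<partial>lborel)"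
    by (rule power_mean[OF xm wm p])
  have e1: "(\<integral>\<^sup>+s. x s * w s \<partial>lborel) = (\<integral>\<^sup>+s. ennreal (\<phi> s / (1 - s)) * indicator {0..r} s \<partial>lborel)"
  proof (intro nn_integral_cong)
    fix s :: real
    show "x s * w s = ennreal (\<phi> s / (1 - s)) * indicator {0..r} s"
    proof (cases "s \<in> {0..r}")
      case True
      then have s: "0 < 1 - s" using r by auto
      have "(1 - s) powr (1/p) * (1 - s) powr (-1 - 1/p) = (1 - s) powr (-1)"
        using s by (simp add: powr_add[symmetric])
      also have "\<dots> = 1 / (1 - s)" using s by (simp add: powr_minus_divide)
      finally have "\<phi> s * (1 - s) powr (1/p) * (1 - s) powr (-1 - 1/p) = \<phi> s / (1 - s)"
        by (simp add: mult.assoc)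
      note eq = this
      have "x s * w s = ennreal (\<phi> s * (1 - s) powr (1/p)) * ennreal ((1 - s) powr (-1 - 1/p))"
        using True by (simp add: x_def w_def)
      also have "\<dots> = ennreal (\<phi> s * (1 - s) powr (1/p) * (1 - s) powr (-1 - 1/p))"
        using ennreal_mult[of "\<phi> s * (1 - s) powr (1/p)" "(1 - s) powr (-1 - 1/p)"] \<phi>0[of s] by simp
      also have "\<dots> = ennreal (\<phi> s / (1 - s))" by (simp only: eq)
      finally show ?thesis using True by simp
    qed (simp add: w_def)
  qed
  have e2: "(\<integral>\<^sup>+s. ennpow (x s) p * w s \<partial>lborel) = (\<integral>\<^sup>+s. ennreal (\<phi> s powr p * (1 - s) powr (-1/p)) * indicator {0..r} s \<partial>lborel)"
  proof (intro nn_integral_cong)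
    fix s :: real
    show "ennpow (x s) p * w s = ennreal (\<phi> s powr p * (1 - s) powr (-1/p)) * indicator {0..r} s"
    proof (cases "s \<in> {0..r}")
      case True
      then have s: "0 < 1 - s" using r by auto
      have "(\<phi> s * (1 - s) powr (1/p)) powr p = \<phi> s powr p * (1 - s)"
        using s p \<phi>0[of s] by (simp add: powr_mult powr_powr)
      moreover have "(1 - s) * (1 - s) powr (-1 - 1/p) = (1 - s) powr (-1/p)"
        using s by (simp add: powr_add[symmetric] powr_mult_base)
      ultimately have "(\<phi> s * (1 - s) powr (1/p)) powr p * (1 - s) powr (-1 - 1/p) = \<phi> s powr p * (1 - s) powr (-1/p)"
        by (simp add: mult.assoc)
      note eq = this
      have "ennpow (x s) p * w s = ennreal ((\<phi> s * (1 - s) powr (1/p)) powr p) * ennreal ((1 - s) powr (-1 - 1/p))"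
        using True \<phi>0[of s] by (simp add: x_def w_def ennpow_ennreal)
      also have "\<dots> = ennreal ((\<phi> s * (1 - s) powr (1/p)) powr p * (1 - s) powr (-1 - 1/p))"
        using ennreal_mult[of "(\<phi> s * (1 - s) powr (1/p)) powr p" "(1 - s) powr (-1 - 1/p)"] by simp
      also have "\<dots> = ennreal (\<phi> s powr p * (1 - s) powr (-1/p))" by (simp only: eq)
      finally show ?thesis using True by simp
    qed (simp add: w_def)
  qed
  have e3: "(\<integral>\<^sup>+s. w s \<partial>lborel) = ennreal (((1 - 0) powr (-1 - 1/p + 1) - (1 - r) powr (-1 - 1/p + 1)) / (-1 - 1/p + 1))"
    unfolding w_def by (rule pow_int_Icc) (use r p in auto)
  have "((1 - 0) powr (-1 - 1/p + 1) - (1 - r) powr (-1 - 1/p + 1)) / (-1 - 1/p + 1) = p * ((1 - r) powr (-1/p) - 1)"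
    using p by (simp add: field_simps)
  also have "\<dots> \<le> p * (1 - r) powr (-1/p)" using p by simp
  finally have W: "(\<integral>\<^sup>+s. w s \<partial>lborel) \<le> ennreal (p * (1 - r) powr (-1/p))"
    unfolding e3 by (rule ennreal_leI)
  have "ennpow (\<integral>\<^sup>+s. w s \<partial>lborel) (p - 1) \<le> ennpow (ennreal (p * (1 - r) powr (-1/p))) (p - 1)"
    by (rule ennpow_mono[OF W]) (use p in auto)
  also have "\<dots> = ennreal (p powr (p - 1) * (1 - r) powr (-((p - 1) / p)))"
  proof -
    have "(p * (1 - r) powr (-1/p)) powr (p - 1) = p powr (p - 1) * (1 - r) powr (-((p - 1) / p))"
      using p r by (simp add: powr_mult powr_powr)
    then show ?thesis using p r by (simp add: ennpow_ennreal)
  qed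
  finally have W2: "ennpow (\<integral>\<^sup>+s. w s \<partial>lborel) (p - 1) \<le> ennreal (p powr (p - 1) * (1 - r) powr (-((p - 1) / p)))" .
  show ?thesis
    using PM unfolding e1 e2
    by (rule order_trans) (rule mult_right_mono[OF W2], simp)
qed

lemma hardy:
  fixes \<phi> :: "real \<Rightarrow> real" and p :: real
  assumes \<phi>m: "\<phi> \<in> borel_measurable borel" and \<phi>0: "\<And>s. 0 \<le> \<phi> s" and p: "1 \<le> p"
  shows "(\<integral>\<^sup>+r. ennpow (\<integral>\<^sup>+s. ennreal (\<phi> s / (1 - s)) * indicator {0..r} s \<partial>lborel) p * indicator {0..<1} r \<partial>lborel)
         \<le> ennreal (p powr p) * (\<integral>\<^sup>+s. ennreal (\<phi> s powr p) * indicator {0..<1} s \<partial>lborel)"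
proof -
  define \<alpha> where "\<alpha> = (p - 1) / p"
  have \<alpha>: "0 \<le> \<alpha>" "\<alpha> < 1" "1 - \<alpha> = 1 / p" using p by (auto simp: \<alpha>_def field_simps)
  define E where "E r = ennreal ((1 - r) powr (-\<alpha>)) * indicator {0..<1} r" for r :: real
  define B where "B s = ennreal (\<phi> s powr p * (1 - s) powr (-1/p))" for s :: real
  define S :: "(real \<times> real) set" where "S = {x. snd x \<le> fst x}"
  define G where "G r s = E r * (B s * (indicator {0..} s * indicator S (r, s)))" for r s :: real
  have Sr: "indicator S (r, s) = (indicator {..r} s :: ennreal)" for r s by (auto simp: S_def indicator_def)
  have Ss: "indicator S (r, s) = (indicator {s..} r :: ennreal)" for r s by (auto simp: S_def indicator_def)
  have \<phi>m': "\<phi> \<in> borel_measurable lborel" using \<phi>m by (simp add: measurable_lborel1)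
  have Sset: "S \<in> sets (lborel \<Otimes>\<^sub>M lborel)"
  proof -
    have "closed S" unfolding S_def by (intro closed_Collect_le continuous_intros)
    then have "S \<in> sets (lborel :: (real \<times> real) measure)" by simp
    then show ?thesis by (simp only: lborel_prod)
  qed
  have Gm: "case_prod G \<in> borel_measurable (lborel \<Otimes>\<^sub>M lborel)"
  proof -
    have m1: "(\<lambda>x::real\<times>real. E (fst x) * (B (snd x) * indicator {0..} (snd x))) \<in> borel_measurable (lborel \<Otimes>\<^sub>M lborel)"
      unfolding E_def B_def using \<phi>m' by measurable
    have m2: "(\<lambda>x::real\<times>real. indicator S x :: ennreal) \<in> borel_measurable (lborel \<Otimes>\<^sub>M lborel)"
      using Sset by simp
    have "(\<lambda>x::real\<times>real. E (fst x) * (B (snd x) * indicator {0..} (snd x)) * indicator S x) \<in> borel_measurable (lborel \<Otimes>\<^sub>M lborel)"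
      using m1 m2 by (rule borel_measurable_times_ennreal)
    then show ?thesis by (simp add: G_def case_prod_beta' mult.assoc)
  qed
  have Bm: "B \<in> borel_measurable lborel" unfolding B_def using \<phi>m' by measurable
  have indeq: "indicator {0..r} s = (indicator {0..} s * indicator {..r} s :: ennreal)" for r s :: real
    by (auto simp: indicator_def)
  have inner_eq: "(\<integral>\<^sup>+s. G r s \<partial>lborel) = E r * (\<integral>\<^sup>+s. ennreal (\<phi> s powr p * (1 - s) powr (-1/p)) * indicator {0..r} s \<partial>lborel)" for r
  proof -
    have m: "(\<lambda>s. B s * (indicator {0..} s * indicator {..r} s)) \<in> borel_measurable lborel"
      using Bm by measurable
    show ?thesis unfolding G_def Sr
      by (subst nn_integral_cmult[OF m]) (simp add: B_def indeq)
  qed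
  have step1: "(\<integral>\<^sup>+r. ennpow (\<integral>\<^sup>+s. ennreal (\<phi> s / (1 - s)) * indicator {0..r} s \<partial>lborel) p * indicator {0..<1} r \<partial>lborel)
      \<le> (\<integral>\<^sup>+r. ennreal (p powr (p - 1)) * (\<integral>\<^sup>+s. G r s \<partial>lborel) \<partial>lborel)"
  proof (rule nn_integral_mono)
    fix r :: real
    show "ennpow (\<integral>\<^sup>+s. ennreal (\<phi> s / (1 - s)) * indicator {0..r} s \<partial>lborel) p * indicator {0..<1} r
        \<le> ennreal (p powr (p - 1)) * (\<integral>\<^sup>+s. G r s \<partial>lborel)"
    proof (cases "r \<in> {0..<1}")
      case True
      then have r: "0 \<le> r" "r < 1" by auto
      have "ennpow (\<integral>\<^sup>+s. ennreal (\<phi> s / (1 - s)) * indicator {0..r} s \<partial>lborel) p * indicator {0..<1} r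
          = ennpow (\<integral>\<^sup>+s. ennreal (\<phi> s / (1 - s)) * indicator {0..r} s \<partial>lborel) p" using True by simp
      also have "\<dots> \<le> ennreal (p powr (p - 1) * (1 - r) powr (-((p - 1) / p)))
         * (\<integral>\<^sup>+s. ennreal (\<phi> s powr p * (1 - s) powr (-1/p)) * indicator {0..r} s \<partial>lborel)"
        by (rule hardy_pointwise[OF \<phi>m \<phi>0 p r])
      also have "ennreal (p powr (p - 1) * (1 - r) powr (-((p - 1) / p))) = ennreal (p powr (p - 1)) * E r"
        using True by (simp add: E_def \<alpha>_def ennreal_mult)
      finally show ?thesis by (simp add: inner_eq mult.assoc)
    qed simp
  qed
  also have "\<dots> = ennreal (p powr (p - 1)) * (\<integral>\<^sup>+r. (\<integral>\<^sup>+s. G r s \<partial>lborel) \<partial>lborel)"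
    by (rule nn_integral_cmult) (rule lborel.borel_measurable_nn_integral[OF Gm])
  also have "(\<integral>\<^sup>+r. (\<integral>\<^sup>+s. G r s \<partial>lborel) \<partial>lborel) = (\<integral>\<^sup>+s. (\<integral>\<^sup>+r. G r s \<partial>lborel) \<partial>lborel)"
    by (rule lborel_pair.Fubini'[OF Gm, symmetric])
  also have "\<dots> \<le> (\<integral>\<^sup>+s. ennreal p * (ennreal (\<phi> s powr p) * indicator {0..<1} s) \<partial>lborel)"
  proof (rule nn_integral_mono)
    fix s :: real
    have m: "(\<lambda>r. E r * (indicator {0..} s * indicator {s..} r)) \<in> borel_measurable lborel"
      unfolding E_def by measurable
    have "(\<integral>\<^sup>+r. G r s \<partial>lborel) = B s * (\<integral>\<^sup>+r. E r * (indicator {0..} s * indicator {s..} r) \<partial>lborel)"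
      unfolding G_def Ss by (subst nn_integral_cmult[OF m, symmetric]) (simp add: mult_ac)
    also have "\<dots> \<le> ennreal p * (ennreal (\<phi> s powr p) * indicator {0..<1} s)"
    proof (cases "s \<in> {0..<1}")
      case True
      then have s: "0 \<le> s" "s < 1" by auto
      have "(\<integral>\<^sup>+r. E r * (indicator {0..} s * indicator {s..} r) \<partial>lborel)
          = (\<integral>\<^sup>+r. ennreal ((1 - r) powr (-\<alpha>)) * indicator {s..<1} r \<partial>lborel)"
        using s by (intro nn_integral_cong) (auto simp: E_def indicator_def)
      also have "\<dots> \<le> ennreal ((1 - s) powr (1 - \<alpha>) / (1 - \<alpha>))"
        by (rule improper_int[OF \<alpha>(1,2) s(2)])
      finally have I: "(\<integral>\<^sup>+r. E r * (indicator {0..} s * indicator {s..} r) \<partial>lborel) \<le> ennreal ((1 - s) powr (1 - \<alpha>) / (1 - \<alpha>))" .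
      have "B s * (\<integral>\<^sup>+r. E r * (indicator {0..} s * indicator {s..} r) \<partial>lborel)
          \<le> B s * ennreal ((1 - s) powr (1 - \<alpha>) / (1 - \<alpha>))"
        by (rule mult_left_mono[OF I]) simp
      also have "\<dots> = ennreal (\<phi> s powr p * (1 - s) powr (-1/p) * ((1 - s) powr (1/p) * p))"
        using \<alpha>(3) s p unfolding B_def
        using ennreal_mult[of "\<phi> s powr p * (1 - s) powr (-1/p)" "(1 - s) powr (1/p) * p"] by simp
      also have "\<phi> s powr p * (1 - s) powr (-1/p) * ((1 - s) powr (1/p) * p) = p * \<phi> s powr p"
      proof -
        have "(1 - s) powr (-1/p) * (1 - s) powr (1/p) = 1"
          using s by (simp add: powr_add[symmetric])
        then show ?thesis by (simp add: algebra_simps)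
      qed
      also have "ennreal (p * \<phi> s powr p) = ennreal p * (ennreal (\<phi> s powr p) * indicator {0..<1} s)"
        using True p by (simp add: ennreal_mult)
      finally show ?thesis .
    next
      case False
      have "(\<integral>\<^sup>+r. E r * (indicator {0..} s * indicator {s..} r) \<partial>lborel) = (\<integral>\<^sup>+r. 0 \<partial>(lborel::real measure))"
        using False by (intro nn_integral_cong) (auto simp: E_def indicator_def)
      then show ?thesis by simp
    qed
    finally show "(\<integral>\<^sup>+r. G r s \<partial>lborel) \<le> ennreal p * (ennreal (\<phi> s powr p) * indicator {0..<1} s)" .
  qed
  also have "\<dots> = ennreal p * (\<integral>\<^sup>+s. ennreal (\<phi> s powr p) * indicator {0..<1} s \<partial>lborel)"
    by (rule nn_integral_cmult) (use \<phi>m' in measurable)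
  finally have "(\<integral>\<^sup>+r. ennpow (\<integral>\<^sup>+s. ennreal (\<phi> s / (1 - s)) * indicator {0..r} s \<partial>lborel) p * indicator {0..<1} r \<partial>lborel)
     \<le> ennreal (p powr (p - 1)) * (ennreal p * (\<integral>\<^sup>+s. ennreal (\<phi> s powr p) * indicator {0..<1} s \<partial>lborel))"
    by (simp add: mult_left_mono)
  also have "\<dots> = ennreal (p powr p) * (\<integral>\<^sup>+s. ennreal (\<phi> s powr p) * indicator {0..<1} s \<partial>lborel)"
  proof -
    have "p powr (p - 1) * p = p powr p" using p by (simp add: powr_diff)
    then have "ennreal (p powr (p - 1)) * ennreal p = ennreal (p powr p)"
      using p by (simp add: ennreal_mult[symmetric])
    then show ?thesis by (simp add: mult.assoc[symmetric])
  qed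
  finally show ?thesis .
qed

lemma g_deriv_bound:
  assumes holg: "g holomorphic_on ball 0 1" and gb: "\<And>z. z \<in> ball 0 1 \<Longrightarrow> norm (g z) \<le> M"
    and z: "z \<in> ball 0 1"
  shows "norm (deriv g z) \<le> 2 * M / (1 - norm z)"
proof -
  define r where "r = (1 - norm z) / 2"
  have r: "0 < r" using z by (simp add: r_def)
  have sub: "cball z r \<subseteq> ball 0 1"
  proof
    fix w assume "w \<in> cball z r"
    then have "norm (w - z) \<le> r" by (simp add: dist_norm norm_minus_commute)
    then have "norm w \<le> norm z + r" using norm_triangle_ineq2[of w z] by linarith
    moreover have "norm z + r < 1"
    proof -
      have "norm z < 1" using z by simp
      then show ?thesis unfolding r_def by (simp add: field_simps)
    qed
    ultimately show "w \<in> ball 0 1" by simp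
  qed
  have "norm ((deriv ^^ 1) g z) \<le> fact 1 * M / r ^ 1"
  proof (rule Cauchy_inequality)
    show "g holomorphic_on ball z r" using holg by (rule holomorphic_on_subset) (use sub in auto)
    show "continuous_on (cball z r) g"
      using holomorphic_on_imp_continuous_on[OF holg] sub by (rule continuous_on_subset)
    show "0 < r" by (rule r)
    fix x assume "norm (z - x) = r"
    then have "x \<in> cball z r" by (simp add: dist_norm)
    with sub show "norm (g x) \<le> M" by (intro gb) auto
  qed
  then show ?thesis by (simp add: r_def mult.commute)
qed

lemma radial_est:
  assumes holf: "f holomorphic_on ball 0 1" and holg: "g holomorphic_on ball 0 1"
    and gb: "\<And>z. z \<in> ball 0 1 \<Longrightarrow> norm (g z) \<le> M" and r: "0 \<le> r" "r < 1"
  shows "norm (S_op g f (of_real r * cis \<theta>)) \<le> M * norm (f (of_real r * cis \<theta>)) + M * norm (f 0)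
           + integral {0..r} (\<lambda>s. 2 * M * norm (f (of_real s * cis \<theta>)) / (1 - s))"
proof -
  define \<gamma> where "\<gamma> s = of_real s * cis \<theta>" for s :: real
  define H where "H z = S_op g f z - f z * g z" for z
  define H' where "H' z = - (f z * deriv g z)" for z
  have \<gamma>in: "\<gamma> s \<in> ball 0 1" if "s \<in> {0..r}" for s
    using that r by (auto simp: \<gamma>_def norm_mult)
  have n\<gamma>: "norm (\<gamma> s) = s" if "0 \<le> s" for s using that by (simp add: \<gamma>_def norm_mult)
  have derH: "(H has_field_derivative H' z) (at z)" if z: "z \<in> ball 0 1" for z
  proof -
    have df: "(f has_field_derivative deriv f z) (at z)"
      using holf z by (intro holomorphic_derivI[OF holf open_ball z])
    have dg: "(g has_field_derivative deriv g z) (at z)"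
      using holg z by (intro holomorphic_derivI[OF holg open_ball z])
    have dfg: "((\<lambda>z. f z * g z) has_field_derivative (deriv f z * g z + deriv g z * f z)) (at z)"
      by (rule DERIV_mult[OF df dg])
    have "(H has_field_derivative (deriv f z * g z - (deriv f z * g z + deriv g z * f z))) (at z)"
      unfolding H_def[abs_def] by (rule DERIV_diff[OF S_op_deriv[OF holf holg z] dfg])
    then show ?thesis by (simp add: H'_def algebra_simps)
  qed
  have vd: "((H \<circ> \<gamma>) has_vector_derivative (cis \<theta> * H' (\<gamma> s))) (at s within {0..r})" if s: "s \<in> {0..r}" for s
  proof -
    have "(\<gamma> has_vector_derivative cis \<theta>) (at s)"
      unfolding \<gamma>_def by (auto intro!: derivative_eq_intros simp: has_vector_derivative_def scaleR_conv_of_real)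
    from field_vector_diff_chain_at[OF this derH[OF \<gamma>in[OF s]]]
    show ?thesis by (rule has_vector_derivative_at_within)
  qed
  have I: "((\<lambda>s. cis \<theta> * H' (\<gamma> s)) has_integral ((H \<circ> \<gamma>) r - (H \<circ> \<gamma>) 0)) {0..r}"
    by (rule fundamental_theorem_of_calculus[OF r(1) vd])
  define u where "u s = 2 * M * norm (f (of_real s * cis \<theta>)) / (1 - s)" for s
  have contf: "continuous_on (ball 0 1) f" using holf by (rule holomorphic_on_imp_continuous_on)
  have cu: "continuous_on {0..r} u"
    unfolding u_def
  proof (intro continuous_intros)
    show "continuous_on {0..r} (\<lambda>s. f (of_real s * cis \<theta>))"
      by (rule continuous_on_compose2[OF contf]) (use \<gamma>in in \<open>auto intro!: continuous_intros simp: \<gamma>_def\<close>)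
  qed (use r in auto)
  have uint: "u integrable_on {0..r}" by (rule integrable_continuous_interval[OF cu])
  have M0: "0 \<le> M" using gb[of 0] norm_ge_zero[of "g 0"] by (meson order_trans centre_in_ball zero_less_one)
  have "norm ((H \<circ> \<gamma>) r - (H \<circ> \<gamma>) 0) \<le> integral {0..r} u"
  proof -
    have "norm (integral {0..r} (\<lambda>s. cis \<theta> * H' (\<gamma> s))) \<le> integral {0..r} u"
    proof (rule integral_norm_bound_integral)
      show "(\<lambda>s. cis \<theta> * H' (\<gamma> s)) integrable_on {0..r}" using I by blast
      show "u integrable_on {0..r}" by (rule uint)
      fix s assume s: "s \<in> {0..r}"
      have z: "\<gamma> s \<in> ball 0 1" by (rule \<gamma>in[OF s])
      have "norm (cis \<theta> * H' (\<gamma> s)) = norm (f (\<gamma> s)) * norm (deriv g (\<gamma> s))"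
        by (simp add: H'_def norm_mult)
      also have "\<dots> \<le> norm (f (\<gamma> s)) * (2 * M / (1 - norm (\<gamma> s)))"
        by (intro mult_left_mono g_deriv_bound[OF holg gb z]) auto
      also have "\<dots> = u s"
      proof -
        have ns: "norm (complex_of_real s * cis \<theta>) = s" using s by (simp add: norm_mult)
        have ns': "norm (cis \<theta> * complex_of_real s) = s" using ns by (simp add: mult.commute)
        show ?thesis by (simp add: u_def \<gamma>_def ns ns' mult.commute)
      qed
      finally show "norm (cis \<theta> * H' (\<gamma> s)) \<le> u s" .
    qed
    moreover have "integral {0..r} (\<lambda>s. cis \<theta> * H' (\<gamma> s)) = (H \<circ> \<gamma>) r - (H \<circ> \<gamma>) 0"
      using I by (rule integral_unique)
    ultimately show ?thesis by simp
  qed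
  moreover have "(H \<circ> \<gamma>) 0 = - (f 0 * g 0)" by (simp add: H_def \<gamma>_def)
  moreover have "(H \<circ> \<gamma>) r = S_op g f (of_real r * cis \<theta>) - f (of_real r * cis \<theta>) * g (of_real r * cis \<theta>)"
    by (simp add: H_def \<gamma>_def)
  moreover have "norm (f (of_real r * cis \<theta>) * g (of_real r * cis \<theta>)) \<le> M * norm (f (of_real r * cis \<theta>))"
  proof -
    have "norm (g (of_real r * cis \<theta>)) \<le> M" using gb \<gamma>in[of r] r by (simp add: \<gamma>_def)
    then have "norm (g (of_real r * cis \<theta>)) * norm (f (of_real r * cis \<theta>)) \<le> M * norm (f (of_real r * cis \<theta>))"
      by (rule mult_right_mono) simp
    then show ?thesis by (simp add: norm_mult mult.commute)
  qed
  moreover have "norm (f 0 * g 0) \<le> M * norm (f 0)"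
  proof -
    have "norm (g 0) * norm (f 0) \<le> M * norm (f 0)"
      using gb[of 0] by (intro mult_right_mono) auto
    then show ?thesis by (simp add: norm_mult mult.commute)
  qed
  ultimately show ?thesis
    unfolding u_def[symmetric]
    using norm_triangle_ineq[of "S_op g f (of_real r * cis \<theta>) - f (of_real r * cis \<theta>) * g (of_real r * cis \<theta>) + f 0 * g 0" "f (of_real r * cis \<theta>) * g (of_real r * cis \<theta>) - f 0 * g 0"]
      norm_triangle_ineq4[of "f (of_real r * cis \<theta>) * g (of_real r * cis \<theta>)" "f 0 * g 0"]
    by (simp add: u_def[abs_def])
qed

lemma ennpow_add3_le:
  assumes "0 < t"
  shows "ennpow (x + y + z) t \<le> ennreal (4 powr t) * (ennpow x t + ennpow y t + ennpow z t)"
proof -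
  have "ennpow ((x + y) + z) t \<le> ennreal (2 powr t) * (ennpow (x + y) t + ennpow z t)"
    by (rule ennpow_add_le[OF assms])
  also have "\<dots> \<le> ennreal (2 powr t) * (ennreal (2 powr t) * (ennpow x t + ennpow y t) + ennreal (2 powr t) * ennpow z t)"
  proof (intro mult_left_mono add_mono ennpow_add_le assms)
    have "1 \<le> (2::real) powr t" using assms by (intro ge_one_powr_ge_zero) auto
    then have "1 \<le> ennreal (2 powr t)" by simp
    then show "ennpow z t \<le> ennreal (2 powr t) * ennpow z t"
      using mult_right_mono[of 1 "ennreal (2 powr t)" "ennpow z t"] by simp
  qed auto
  also have "\<dots> = (ennreal (2 powr t) * ennreal (2 powr t)) * (ennpow x t + ennpow y t + ennpow z t)"
    by (simp add: algebra_simps)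
  also have "ennreal (2 powr t) * ennreal (2 powr t) = ennreal (4 powr t)"
  proof -
    have "(2::real) powr t * 2 powr t = 4 powr t"
      by (simp add: powr_mult[symmetric])
    then show ?thesis by (simp add: ennreal_mult[symmetric])
  qed
  finally show ?thesis .
qed

lemma meas_radial:
  assumes contf: "continuous_on (ball 0 1) f"
  shows "(\<lambda>s::real. norm (f (of_real s * cis \<theta>)) * indicator {0..<1} s) \<in> borel_measurable borel"
proof -
  have c0: "continuous_on {-1<..<1} (\<lambda>s::real. f (of_real s * cis \<theta>))"
    by (rule continuous_on_compose2[OF contf]) (auto intro!: continuous_intros simp: norm_mult)
  have c: "continuous_on {-1<..<1} (\<lambda>s::real. norm (f (of_real s * cis \<theta>)))"
    by (intro continuous_intros c0)
  have m: "(\<lambda>s::real. indicator {-1<..<1} s *\<^sub>R norm (f (of_real s * cis \<theta>))) \<in> borel_measurable borel"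
    by (rule borel_measurable_continuous_on_indicator[OF _ c]) auto
  have "(\<lambda>s::real. (indicator {-1<..<1} s *\<^sub>R norm (f (of_real s * cis \<theta>))) * indicator {0..<1} s) \<in> borel_measurable borel"
    using m by measurable
  also have "(\<lambda>s::real. (indicator {-1<..<1} s *\<^sub>R norm (f (of_real s * cis \<theta>))) * indicator {0..<1} s)
    = (\<lambda>s::real. norm (f (of_real s * cis \<theta>)) * indicator {0..<1} s)"
    by (auto simp: fun_eq_iff indicator_def)
  finally show ?thesis .
qed

lemma meas_A:
  fixes \<psi> :: "real \<Rightarrow> real"
  assumes \<psi>m: "\<psi> \<in> borel_measurable borel"
  shows "(\<lambda>r. \<integral>\<^sup>+s. ennreal (\<psi> s) * indicator {0..r} s \<partial>lborel) \<in> borel_measurable lborel"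
proof -
  define S :: "(real \<times> real) set" where "S = {x. snd x \<le> fst x}"
  have Sset: "S \<in> sets (lborel \<Otimes>\<^sub>M lborel)"
  proof -
    have "closed S" unfolding S_def by (intro closed_Collect_le continuous_intros)
    then have "S \<in> sets (lborel :: (real \<times> real) measure)" by simp
    then show ?thesis by (simp only: lborel_prod)
  qed
  have \<psi>m': "\<psi> \<in> borel_measurable lborel" using \<psi>m by (simp add: measurable_lborel1)
  have m1: "(\<lambda>x::real\<times>real. ennreal (\<psi> (snd x)) * indicator {0..} (snd x)) \<in> borel_measurable (lborel \<Otimes>\<^sub>M lborel)"
    using \<psi>m' by measurable
  have m2: "(\<lambda>x::real\<times>real. indicator S x :: ennreal) \<in> borel_measurable (lborel \<Otimes>\<^sub>M lborel)"
    using Sset by simp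
  have "(\<lambda>x::real\<times>real. ennreal (\<psi> (snd x)) * indicator {0..} (snd x) * indicator S x) \<in> borel_measurable (lborel \<Otimes>\<^sub>M lborel)"
    using m1 m2 by (rule borel_measurable_times_ennreal)
  then have "(\<lambda>r. \<integral>\<^sup>+s. (\<lambda>(r, s). ennreal (\<psi> s) * indicator {0..} s * indicator S (r, s)) (r, s) \<partial>lborel) \<in> borel_measurable lborel"
    by (intro lborel.borel_measurable_nn_integral) (simp add: case_prod_beta')
  also have "(\<lambda>r. \<integral>\<^sup>+s. (\<lambda>(r, s). ennreal (\<psi> s) * indicator {0..} s * indicator S (r, s)) (r, s) \<partial>lborel)
      = (\<lambda>r. \<integral>\<^sup>+s. ennreal (\<psi> s) * indicator {0..r} s \<partial>lborel)"
    by (intro ext nn_integral_cong) (auto simp: S_def indicator_def)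
  finally show ?thesis .
qed

lemma inner_h_bound:
  assumes holf: "f holomorphic_on ball 0 1" and holg: "g holomorphic_on ball 0 1"
    and gb: "\<And>z. z \<in> ball 0 1 \<Longrightarrow> norm (g z) \<le> M" and M0: "0 \<le> M" and p: "1 \<le> p"
  shows "rm_inner p (S_op g f) \<theta> \<le> ennreal (4 powr p * (M powr p + p powr p * (2*M) powr p)) * rm_inner p f \<theta>
            + ennreal (4 powr p * (M * norm (f 0)) powr p)"
proof -
  define \<Phi> where "\<Phi> s = norm (f (of_real s * cis \<theta>)) * indicator {0..<1} s" for s :: real
  have contf: "continuous_on (ball 0 1) f" using holf by (rule holomorphic_on_imp_continuous_on)
  have \<Phi>m: "\<Phi> \<in> borel_measurable borel" unfolding \<Phi>_def by (rule meas_radial[OF contf])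
  have \<Phi>m': "\<Phi> \<in> borel_measurable lborel" using \<Phi>m by (simp add: measurable_lborel1)
  have \<Phi>0: "0 \<le> \<Phi> s" for s by (simp add: \<Phi>_def)
  define A where "A r = (\<integral>\<^sup>+s. ennreal (2 * M * \<Phi> s / (1 - s)) * indicator {0..r} s \<partial>lborel)" for r
  have Am: "A \<in> borel_measurable lborel"
    unfolding A_def by (rule meas_A) (use \<Phi>m in measurable)
  define c where "c = M * norm (f 0)"
  have c0: "0 \<le> c" using M0 by (simp add: c_def)
  have pt: "ennreal (norm (S_op g f (of_real r * cis \<theta>))) \<le> ennreal (M * \<Phi> r) + ennreal c + A r"
    if r: "0 \<le> r" "r < 1" for r
  proof -
    define u where "u s = 2 * M * norm (f (of_real s * cis \<theta>)) / (1 - s)" for s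
    have R: "norm (S_op g f (of_real r * cis \<theta>)) \<le> M * norm (f (of_real r * cis \<theta>)) + M * norm (f 0) + integral {0..r} u"
      unfolding u_def by (rule radial_est[OF holf holg gb r])
    have cu: "continuous_on {0..r} u"
      unfolding u_def
    proof (intro continuous_intros)
      show "continuous_on {0..r} (\<lambda>s. f (of_real s * cis \<theta>))"
        by (rule continuous_on_compose2[OF contf]) (use r in \<open>auto intro!: continuous_intros simp: norm_mult\<close>)
    qed (use r in auto)
    have uint: "u integrable_on {0..r}" by (rule integrable_continuous_interval[OF cu])
    have u0: "0 \<le> u s" if "s \<in> {0..r}" for s using that r M0 by (simp add: u_def)
    have "(\<integral>\<^sup>+s. ennreal (u s) * indicator {0..r} s \<partial>lborel) = ennreal (integral {0..r} u)"
      by (rule nn_integral_has_integral_lebesgue'[OF u0 integrable_integral[OF uint]])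
    moreover have "(\<integral>\<^sup>+s. ennreal (u s) * indicator {0..r} s \<partial>lborel) = A r"
      unfolding A_def using r by (intro nn_integral_cong) (auto simp: u_def \<Phi>_def indicator_def)
    ultimately have IA: "ennreal (integral {0..r} u) = A r" by simp
    have I0: "0 \<le> integral {0..r} u" by (rule integral_nonneg[OF uint u0])
    have "ennreal (norm (S_op g f (of_real r * cis \<theta>))) \<le> ennreal (M * norm (f (of_real r * cis \<theta>)) + M * norm (f 0) + integral {0..r} u)"
      by (rule ennreal_leI[OF R])
    also have "\<dots> = ennreal (M * \<Phi> r) + ennreal c + ennreal (integral {0..r} u)"
      using M0 I0 r by (simp add: \<Phi>_def c_def)
    finally show ?thesis unfolding IA .
  qed
  have pt2: "ennreal (norm (S_op g f (of_real r * cis \<theta>)) powr p) * indicator {0..<1} r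
      \<le> ennreal (4 powr p) * (ennreal ((M * \<Phi> r) powr p) * indicator {0..<1} r)
        + ennreal (4 powr p) * (ennreal (c powr p) * indicator {0..<1} r)
        + ennreal (4 powr p) * (ennpow (A r) p * indicator {0..<1} r)" for r
  proof (cases "r \<in> {0..<1}")
    case True
    then have r: "0 \<le> r" "r < 1" by auto
    have "ennreal (norm (S_op g f (of_real r * cis \<theta>)) powr p) = ennpow (ennreal (norm (S_op g f (of_real r * cis \<theta>)))) p"
      by (simp add: ennpow_ennreal)
    also have "\<dots> \<le> ennpow (ennreal (M * \<Phi> r) + ennreal c + A r) p"
      by (rule ennpow_mono[OF pt[OF r]]) (use p in auto)
    also have "\<dots> \<le> ennreal (4 powr p) * (ennpow (ennreal (M * \<Phi> r)) p + ennpow (ennreal c) p + ennpow (A r) p)"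
      by (rule ennpow_add3_le) (use p in auto)
    also have "\<dots> = ennreal (4 powr p) * (ennreal ((M * \<Phi> r) powr p)) + ennreal (4 powr p) * ennreal (c powr p)
        + ennreal (4 powr p) * ennpow (A r) p"
      using M0 c0 \<Phi>0[of r] by (simp add: ennpow_ennreal distrib_left)
    finally show ?thesis using True by simp
  qed simp
  have m1: "(\<lambda>r. ennreal ((M * \<Phi> r) powr p) * indicator {0..<1} r) \<in> borel_measurable lborel"
    using \<Phi>m' by measurable
  have m3: "(\<lambda>r. ennpow (A r) p * indicator {0..<1} r) \<in> borel_measurable lborel"
    using Am by measurable
  have rmf: "rm_inner p f \<theta> = (\<integral>\<^sup>+r. ennreal (\<Phi> r powr p) * indicator {0..<1} r \<partial>lborel)"
    unfolding rm_inner_def by (intro nn_integral_cong) (auto simp: \<Phi>_def indicator_def)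
  have "rm_inner p (S_op g f) \<theta> \<le> (\<integral>\<^sup>+r. ennreal (4 powr p) * (ennreal ((M * \<Phi> r) powr p) * indicator {0..<1} r)
        + ennreal (4 powr p) * (ennreal (c powr p) * indicator {0..<1} r)
        + ennreal (4 powr p) * (ennpow (A r) p * indicator {0..<1} r) \<partial>lborel)"
    unfolding rm_inner_def by (intro nn_integral_mono pt2)
  also have "\<dots> = ennreal (4 powr p) * (\<integral>\<^sup>+r. ennreal ((M * \<Phi> r) powr p) * indicator {0..<1} r \<partial>lborel)
        + ennreal (4 powr p) * (\<integral>\<^sup>+r. ennreal (c powr p) * indicator {0..<(1::real)} r \<partial>lborel)
        + ennreal (4 powr p) * (\<integral>\<^sup>+r. ennpow (A r) p * indicator {0..<1} r \<partial>lborel)"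
  proof -
    have ci: "(\<integral>\<^sup>+r. ennreal (c powr p) * indicator {0..<(1::real)} r \<partial>lborel) = ennreal (c powr p)"
      by (simp add: nn_integral_cmult_indicator)
    show ?thesis using m1 m3 by (simp add: nn_integral_add nn_integral_cmult ci)
  qed
  also have "(\<integral>\<^sup>+r. ennreal ((M * \<Phi> r) powr p) * indicator {0..<1} r \<partial>lborel) = ennreal (M powr p) * rm_inner p f \<theta>"
  proof -
    have "(\<integral>\<^sup>+r. ennreal ((M * \<Phi> r) powr p) * indicator {0..<1} r \<partial>lborel)
        = (\<integral>\<^sup>+r. ennreal (M powr p) * (ennreal (\<Phi> r powr p) * indicator {0..<1} r) \<partial>lborel)"
      using M0 \<Phi>0 by (intro nn_integral_cong) (simp add: powr_mult ennreal_mult mult.assoc)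
    also have "\<dots> = ennreal (M powr p) * rm_inner p f \<theta>"
      unfolding rmf by (rule nn_integral_cmult) (use \<Phi>m' in measurable)
    finally show ?thesis .
  qed
  also have "(\<integral>\<^sup>+r. ennreal (c powr p) * indicator {0..<(1::real)} r \<partial>lborel) = ennreal (c powr p)"
    by (simp add: nn_integral_cmult_indicator)
  also have "(\<integral>\<^sup>+r. ennpow (A r) p * indicator {0..<1} r \<partial>lborel) \<le> ennreal (p powr p * (2*M) powr p) * rm_inner p f \<theta>"
  proof -
    have "(\<integral>\<^sup>+r. ennpow (A r) p * indicator {0..<1} r \<partial>lborel)
        \<le> ennreal (p powr p) * (\<integral>\<^sup>+s. ennreal ((2 * M * \<Phi> s) powr p) * indicator {0..<1} s \<partial>lborel)"
      unfolding A_def by (rule hardy[of "\<lambda>s. 2 * M * \<Phi> s", simplified]) (use \<Phi>m M0 \<Phi>0 p in auto)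
    also have "(\<integral>\<^sup>+s. ennreal ((2 * M * \<Phi> s) powr p) * indicator {0..<1} s \<partial>lborel)
        = ennreal ((2*M) powr p) * rm_inner p f \<theta>"
    proof -
      have "(\<integral>\<^sup>+s. ennreal ((2 * M * \<Phi> s) powr p) * indicator {0..<1} s \<partial>lborel)
          = (\<integral>\<^sup>+s. ennreal ((2*M) powr p) * (ennreal (\<Phi> s powr p) * indicator {0..<1} s) \<partial>lborel)"
        using M0 \<Phi>0 by (intro nn_integral_cong) (simp add: powr_mult ennreal_mult mult.assoc)
      also have "\<dots> = ennreal ((2*M) powr p) * rm_inner p f \<theta>"
        unfolding rmf by (rule nn_integral_cmult) (use \<Phi>m' in measurable)
      finally show ?thesis .
    qed
    finally show ?thesis by (simp add: ennreal_mult mult.assoc)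
  qed
  finally have "rm_inner p (S_op g f) \<theta> \<le> ennreal (4 powr p) * (ennreal (M powr p) * rm_inner p f \<theta>)
       + ennreal (4 powr p) * ennreal (c powr p) + ennreal (4 powr p) * (ennreal (p powr p * (2*M) powr p) * rm_inner p f \<theta>)"
    by (simp add: add_left_mono mult_left_mono)
  also have "\<dots> = ennreal (4 powr p * (M powr p + p powr p * (2*M) powr p)) * rm_inner p f \<theta>
            + ennreal (4 powr p * c powr p)"
    using M0 by (simp add: ennreal_mult distrib_left distrib_right mult.assoc algebra_simps)
  finally show ?thesis by (simp add: c_def)
qed

lemma f0_bound:
  assumes holf: "f holomorphic_on ball 0 1" and p: "1 \<le> p" and q: "1 \<le> q"
  shows "ennreal (norm (f 0) powr q) \<le> ennreal ((2*pi) powr (q - 1) / pi powr q) * NN p q f"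
proof -
  have contf: "continuous_on (ball 0 1) f" using holf by (rule holomorphic_on_imp_continuous_on)
  have "ennreal (1 - 1/2) * ennreal (2 * pi * norm (f 0)) \<le> ennreal 1 * DD f"
  proof (rule avg_tonelli[OF contf])
    fix \<rho> :: real assume "1/2 \<le> \<rho>" "\<rho> < 1"
    then have "ennreal (2 * pi * norm (f 0)) \<le> (\<integral>\<^sup>+\<theta>\<in>{0..2*pi}. ennreal (norm (f (of_real \<rho> * cis \<theta>))) \<partial>lborel)"
      by (intro val0_bound[OF holf]) auto
    then show "ennreal (2 * pi * norm (f 0)) \<le> ennreal 1 * (\<integral>\<^sup>+\<theta>\<in>{0..2*pi}. ennreal (norm (f (of_real \<rho> * cis \<theta>))) \<partial>lborel)"
      by simp
  qed auto
  moreover have "ennreal (1 - 1/2) * ennreal (2 * pi * norm (f 0)) = ennreal (pi * norm (f 0))"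
    using ennreal_mult[of "1 - 1/2" "2 * pi * norm (f 0)"] by simp
  ultimately have "ennreal (pi * norm (f 0)) \<le> DD f" by simp
  then have "ennpow (ennreal (pi * norm (f 0))) q \<le> ennpow (DD f) q"
    by (rule ennpow_mono) (use q in auto)
  also have "\<dots> \<le> ennreal ((2*pi) powr (q - 1)) * NN p q f"
    by (rule DD_bound[OF contf p q])
  finally have h: "ennreal (pi powr q * norm (f 0) powr q) \<le> ennreal ((2*pi) powr (q - 1)) * NN p q f"
    by (simp add: ennpow_ennreal powr_mult)
  have "ennreal (1 / pi powr q) * ennreal (pi powr q * norm (f 0) powr q) \<le> ennreal (1 / pi powr q) * (ennreal ((2*pi) powr (q - 1)) * NN p q f)"
    using h by (rule mult_left_mono) simp
  moreover have "ennreal (1 / pi powr q) * ennreal (pi powr q * norm (f 0) powr q) = ennreal (norm (f 0) powr q)"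
    using ennreal_mult[of "1 / pi powr q" "pi powr q * norm (f 0) powr q"] by simp
  moreover have "ennreal (1 / pi powr q) * (ennreal ((2*pi) powr (q - 1)) * NN p q f) = ennreal ((2*pi) powr (q - 1) / pi powr q) * NN p q f"
    using ennreal_mult[of "1 / pi powr q" "(2*pi) powr (q - 1)"] by (simp add: mult.assoc[symmetric])
  ultimately show ?thesis by simp
qed

lemma NN_h_bound:
  assumes holf: "f holomorphic_on ball 0 1" and holg: "g holomorphic_on ball 0 1"
    and gb: "\<And>z. z \<in> ball 0 1 \<Longrightarrow> norm (g z) \<le> M" and M0: "0 \<le> M" and p: "1 \<le> p" and q: "1 \<le> q"
  defines "K1 \<equiv> 4 powr p * (M powr p + p powr p * (2*M) powr p)"
  defines "Kc \<equiv> 2 powr (q/p) * K1 powr (q/p) + 2 * pi * 2 powr (q/p) * 4 powr q * M powr q * ((2*pi) powr (q - 1) / pi powr q)"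
  shows "NN p q (S_op g f) \<le> ennreal Kc * NN p q f"
proof -
  define t where "t = q / p"
  have t: "0 < t" using p q by (simp add: t_def)
  have K1: "0 \<le> K1" using M0 p by (simp add: K1_def)
  define c where "c = 4 powr p * (M * norm (f 0)) powr p"
  have c: "0 \<le> c" by (simp add: c_def)
  have contf: "continuous_on (ball 0 1) f" using holf by (rule holomorphic_on_imp_continuous_on)
  have Yb: "ennpow (rm_inner p (S_op g f) \<theta>) t \<le> ennreal (2 powr t * K1 powr t) * ennpow (rm_inner p f \<theta>) t + ennreal (2 powr t * c powr t)" for \<theta>
  proof -
    have "ennpow (rm_inner p (S_op g f) \<theta>) t \<le> ennpow (ennreal K1 * rm_inner p f \<theta> + ennreal c) t"
      by (rule ennpow_mono) (use inner_h_bound[OF holf holg gb M0 p, of \<theta>] t in \<open>auto simp: K1_def c_def\<close>)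
    also have "\<dots> \<le> ennreal (2 powr t) * (ennpow (ennreal K1 * rm_inner p f \<theta>) t + ennpow (ennreal c) t)"
      by (rule ennpow_add_le[OF t])
    also have "\<dots> = ennreal (2 powr t) * (ennreal (K1 powr t) * ennpow (rm_inner p f \<theta>) t + ennreal (c powr t))"
      using K1 c t by (simp add: ennpow_mult ennpow_ennreal)
    also have "\<dots> = ennreal (2 powr t * K1 powr t) * ennpow (rm_inner p f \<theta>) t + ennreal (2 powr t * c powr t)"
      using ennreal_mult[of "2 powr t" "K1 powr t"] ennreal_mult[of "2 powr t" "c powr t"]
      by (simp add: distrib_left mult.assoc)
    finally show ?thesis .
  qed
  have Xm: "(\<lambda>\<theta>. ennpow (rm_inner p f \<theta>) t) \<in> borel_measurable lborel"
    by (intro measurable_ennpow rm_inner_meas contf) (use p in auto)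
  have "NN p q (S_op g f) \<le> (\<integral>\<^sup>+\<theta>. (ennreal (2 powr t * K1 powr t) * ennpow (rm_inner p f \<theta>) t + ennreal (2 powr t * c powr t)) * indicator {0..2*pi} \<theta> \<partial>lborel)"
    unfolding NN_def t_def[symmetric] by (intro nn_integral_mono mult_right_mono Yb) auto
  also have "\<dots> = ennreal (2 powr t * K1 powr t) * NN p q f + ennreal (2 powr t * c powr t) * ennreal (2 * pi)"
  proof -
    have "(\<integral>\<^sup>+\<theta>. (ennreal (2 powr t * K1 powr t) * ennpow (rm_inner p f \<theta>) t + ennreal (2 powr t * c powr t)) * indicator {0..2*pi} \<theta> \<partial>lborel)
        = (\<integral>\<^sup>+\<theta>. ennreal (2 powr t * K1 powr t) * (ennpow (rm_inner p f \<theta>) t * indicator {0..2*pi} \<theta>) + ennreal (2 powr t * c powr t) * indicator {0..(2::real)*pi} \<theta> \<partial>lborel)"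
      by (intro nn_integral_cong) (simp add: distrib_right mult.assoc)
    also have "\<dots> = ennreal (2 powr t * K1 powr t) * (\<integral>\<^sup>+\<theta>. ennpow (rm_inner p f \<theta>) t * indicator {0..2*pi} \<theta> \<partial>lborel)
        + ennreal (2 powr t * c powr t) * ennreal (2 * pi)"
      using Xm by (simp add: nn_integral_add nn_integral_cmult nn_integral_cmult_indicator)
    finally show ?thesis unfolding NN_def t_def by simp
  qed
  also have "c powr t = 4 powr q * M powr q * norm (f 0) powr q"
  proof -
    have "c powr t = (4 powr p) powr t * ((M * norm (f 0)) powr p) powr t"
      unfolding c_def using M0 by (simp add: powr_mult)
    also have "\<dots> = 4 powr q * (M * norm (f 0)) powr q"
      using p by (simp add: powr_powr t_def)
    also have "\<dots> = 4 powr q * M powr q * norm (f 0) powr q"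
      using M0 by (simp add: powr_mult)
    finally show ?thesis .
  qed
  also have "ennreal (2 powr t * (4 powr q * M powr q * norm (f 0) powr q)) * ennreal (2 * pi)
      = ennreal (2 * pi * 2 powr t * 4 powr q * M powr q) * ennreal (norm (f 0) powr q)"
    by (simp add: ennreal_mult[symmetric] mult_ac)
  also have "\<dots> \<le> ennreal (2 * pi * 2 powr t * 4 powr q * M powr q) * (ennreal ((2*pi) powr (q - 1) / pi powr q) * NN p q f)"
    by (rule mult_left_mono[OF f0_bound[OF holf p q]]) simp
  also have "ennreal (2 powr t * K1 powr t) * NN p q f + ennreal (2 * pi * 2 powr t * 4 powr q * M powr q) * (ennreal ((2*pi) powr (q - 1) / pi powr q) * NN p q f)
      = ennreal Kc * NN p q f"
  proof -
    define D where "D = 2 * pi * 2 powr t * 4 powr q * M powr q"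
    define E where "E = (2*pi) powr (q - 1) / pi powr q"
    define A where "A = 2 powr t * K1 powr t"
    have D: "0 \<le> D" using M0 by (simp add: D_def)
    have E: "0 \<le> E" by (simp add: E_def)
    have A: "0 \<le> A" by (simp add: A_def)
    have "ennreal A * NN p q f + ennreal D * (ennreal E * NN p q f) = ennreal A * NN p q f + ennreal (D * E) * NN p q f"
      using ennreal_mult[OF D E] by (simp add: mult.assoc)
    also have "\<dots> = (ennreal A + ennreal (D * E)) * NN p q f" by (simp only: distrib_right)
    also have "ennreal A + ennreal (D * E) = ennreal (A + D * E)" using A D E by simp
    also have "A + D * E = Kc" unfolding Kc_def A_def D_def E_def t_def by simp
    finally show ?thesis unfolding A_def D_def E_def .
  qed
  finally show ?thesis by (simp add: add_left_mono)
qed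

lemma sufficiency:
  assumes p: "1 \<le> p" and q: "1 \<le> q" and holg: "g holomorphic_on ball 0 1"
    and gb: "\<And>z. z \<in> ball 0 1 \<Longrightarrow> norm (g z) \<le> M" and M0: "0 \<le> M"
  shows "bounded_on_RM p q (S_op g)"
proof -
  define K1 where "K1 = 4 powr p * (M powr p + p powr p * (2*M) powr p)"
  define Kc where "Kc = 2 powr (q/p) * K1 powr (q/p) + 2 * pi * 2 powr (q/p) * 4 powr q * M powr q * ((2*pi) powr (q - 1) / pi powr q)"
  have Kc0: "0 \<le> Kc" using M0 by (simp add: Kc_def)
  define C where "C = Kc powr (1/q)"
  have C0: "0 \<le> C" by (simp add: C_def)
  have main: "rm_norm p q (S_op g f) \<le> ennreal C * rm_norm p q f" if f: "f \<in> RM p q" for f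
  proof -
    have holf: "f holomorphic_on ball 0 1" using f by (simp add: RM_def)
    have NNb: "NN p q (S_op g f) \<le> ennreal Kc * NN p q f"
      unfolding Kc_def K1_def by (rule NN_h_bound[OF holf holg gb M0 p q])
    have "rm_norm p q (S_op g f) \<le> ennpow (ennreal (1 / (2 * pi)) * (ennreal Kc * NN p q f)) (1 / q)"
      unfolding rm_norm_NN by (intro ennpow_mono mult_left_mono NNb) (use q in auto)
    also have "ennreal (1 / (2 * pi)) * (ennreal Kc * NN p q f) = ennreal Kc * (ennreal (1 / (2 * pi)) * NN p q f)"
      by (simp add: mult_ac)
    also have "ennpow \<dots> (1 / q) = ennpow (ennreal Kc) (1/q) * rm_norm p q f"
      unfolding rm_norm_NN by (rule ennpow_mult) (use q in auto)
    also have "ennpow (ennreal Kc) (1/q) = ennreal C"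
      using Kc0 by (simp add: ennpow_ennreal C_def)
    finally show ?thesis .
  qed
  have clos: "S_op g f \<in> RM p q" if f: "f \<in> RM p q" for f
  proof -
    have holf: "f holomorphic_on ball 0 1" using f by (simp add: RM_def)
    have "rm_norm p q (S_op g f) \<le> ennreal C * rm_norm p q f" by (rule main[OF f])
    also have "\<dots> < top" using f by (simp add: RM_def ennreal_mult_less_top)
    finally have "rm_norm p q (S_op g f) < top" .
    then show ?thesis
      unfolding RM_def using S_op_holo[OF holf holg] by simp
  qed
  show ?thesis
    unfolding bounded_on_RM_def using clos main C0 by blast
qed

theorem proposition2:
  fixes p q :: real and g :: "complex \<Rightarrow> complex"
  assumes "1 \<le> p" and "1 \<le> q" and "g holomorphic_on ball 0 1"
  shows "bounded_on_RM p q (S_op g) \<longleftrightarrow> bounded (g ` ball 0 1)"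
proof
  assume "bounded_on_RM p q (S_op g)"
  then show "bounded (g ` ball 0 1)" by (rule necessity[OF assms])
next
  assume "bounded (g ` ball 0 1)"
  then obtain B where B: "\<And>z. z \<in> ball 0 1 \<Longrightarrow> norm (g z) \<le> B"
    unfolding bounded_iff by blast
  show "bounded_on_RM p q (S_op g)"
  proof (rule sufficiency[OF assms])
    show "norm (g z) \<le> max B 0" if "z \<in> ball 0 1" for z using B[OF that] by simp
  qed simp
qed

end
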